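(* Let $k$ be a field, $\Gamma=(V,E)$ a finite connected quiver, and $I\subseteq R^2$ a two-sided ideal of $k\Gamma$ such that $k\Gamma/I$ is finite dimensional. With $\mathscr{Q}$, $\mathscr{Q}_C$ and $\mathfrak{B}_2$ as in the context, $$\dim_k H^1(k\Gamma,k\Gamma/I)=|\mathfrak{B}_2|+\dim_k Z(k\Gamma/I)-|\mathscr{Q}_C|.$$
   Context: For a path $p$, $t(p),h(p)$ are its start and end vertex; paths multiply by left-to-right concatenation (product $0$ if they do not concatenate). $R$ is the ideal generated by $E$, $\overline{x}=x+I$. A differential operator from $k\Gamma$ to $k\Gamma/I$ is a $k$-linear map with $D(xy)=D(x)\overline{y}+\overline{x}D(y)$; inner ones are those of the form $x\mapsto m\overline{x}-\overline{x}m$, $m\in k\Gamma/I$; $H^1(k\Gamma,k\Gamma/I)$ is the quotient of the space of differential operators by the inner ones. $Z(k\Gamma/I)$ is the center of $k\Gamma/I$. $\mathscr{Q}$ is a fixed $k$-basis of $k\Gamma/I$ consisting of residue classes of paths and containing the classes of all vertices and arrows; for $\overline{s}\in\mathscr{Q}$, $t(\overline{s}),h(\overline{s})$ are the start/end vertex of any representing path (well defined). $\mathscr{Q}_C=\{\overline{q}\in\mathscr{Q}\mid t(\overline{q})=h(\overline{q})\}$. $\mathfrak{B}_2=\{D_{r,\overline{s}}\mid r\in E,\ \overline{s}\in\mathscr{Q},\ t(r)=t(\overline{s}),\ h(r)=h(\overline{s})\}$, where $D_{r,\overline{s}}$ is the unique differential operator $k\Gamma\to k\Gamma/I$ with $D_{r,\overline{s}}(r)=\overline{s}$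 and vanishing on all other arrows and all vertices. *)

theory Defs
  imports Main
begin

text \<open>Quiver: vertex set V, arrow set E, start map s (= t in the paper), end map h.
  A path is a pair (start vertex, list of arrows), read left to right; the trivial
  path at v is (v, []) and the arrow e is the path (s e, [e]).\<close>

type_synonym ('v,'e) path = "'v \<times> 'e list"

definition valid_path :: "'v set \<Rightarrow> 'e set \<Rightarrow> ('e \<Rightarrow> 'v) \<Rightarrow> ('e \<Rightarrow> 'v) \<Rightarrow> ('v,'e) path \<Rightarrow> bool" where
  "valid_path V E s h p \<longleftrightarrow> fst p \<in> V \<and> set (snd p) \<subseteq> E
     \<and> (snd p \<noteq> [] \<longrightarrow> s (hd (snd p)) = fst p)
     \<and> (\<forall>i. Suc i < length (snd p) \<longrightarrow> h (snd p ! i) = s (snd p ! Suc i))"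

definition path_start :: "('v,'e) path \<Rightarrow> 'v" where
  "path_start p = fst p"

definition path_end :: "('e \<Rightarrow> 'v) \<Rightarrow> ('v,'e) path \<Rightarrow> 'v" where
  "path_end h p = (if snd p = [] then fst p else h (last (snd p)))"

definition path_cat :: "('e \<Rightarrow> 'v) \<Rightarrow> ('v,'e) path \<Rightarrow> ('v,'e) path \<Rightarrow> ('v,'e) path option" where
  "path_cat h p q = (if path_end h p = fst q then Some (fst p, snd p @ snd q) else None)"

definition quiver_connected :: "'v set \<Rightarrow> 'e set \<Rightarrow> ('e \<Rightarrow> 'v) \<Rightarrow> ('e \<Rightarrow> 'v) \<Rightarrow> bool" where
  "quiver_connected V E s h \<longleftrightarrow>
     (\<forall>u\<in>V. \<forall>w\<in>V. (u, w) \<in> ({(s e, h e) | e. e \<in> E} \<union> {(h e, s e) | e. e \<in> E})\<^sup>*)"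

definition pathalg :: "'v set \<Rightarrow> 'e set \<Rightarrow> ('e \<Rightarrow> 'v) \<Rightarrow> ('e \<Rightarrow> 'v) \<Rightarrow> (('v,'e) path \<Rightarrow> 'k::field) set" where
  "pathalg V E s h = {f. finite {p. f p \<noteq> 0} \<and> (\<forall>p. f p \<noteq> 0 \<longrightarrow> valid_path V E s h p)}"

definition padd :: "('a \<Rightarrow> 'k::field) \<Rightarrow> ('a \<Rightarrow> 'k) \<Rightarrow> 'a \<Rightarrow> 'k" where
  "padd f g = (\<lambda>p. f p + g p)"

definition psub :: "('a \<Rightarrow> 'k::field) \<Rightarrow> ('a \<Rightarrow> 'k) \<Rightarrow> 'a \<Rightarrow> 'k" where
  "psub f g = (\<lambda>p. f p - g p)"

definition psc :: "'k::field \<Rightarrow> ('a \<Rightarrow> 'k) \<Rightarrow> 'a \<Rightarrow> 'k" where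
  "psc c f = (\<lambda>p. c * f p)"

definition pzero :: "'a \<Rightarrow> 'k::field" where
  "pzero = (\<lambda>p. 0)"

definition ind :: "'a \<Rightarrow> 'a \<Rightarrow> 'k::field" where
  "ind q = (\<lambda>p. if p = q then 1 else 0)"

definition pmul :: "('e \<Rightarrow> 'v) \<Rightarrow> (('v,'e) path \<Rightarrow> 'k::field) \<Rightarrow> (('v,'e) path \<Rightarrow> 'k) \<Rightarrow> ('v,'e) path \<Rightarrow> 'k" where
  "pmul h f g = (\<lambda>r. \<Sum>p\<in>{p. f p \<noteq> 0}. \<Sum>q\<in>{q. g q \<noteq> 0}.
       (if path_cat h p q = Some r then f p * g q else 0))"

definition two_sided_ideal :: "'v set \<Rightarrow> 'e set \<Rightarrow> ('e \<Rightarrow> 'v) \<Rightarrow> ('e \<Rightarrow> 'v) \<Rightarrow> (('v,'e) path \<Rightarrow> 'k::field) set \<Rightarrow> bool" where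
  "two_sided_ideal V E s h I \<longleftrightarrow> I \<subseteq> pathalg V E s h \<and> pzero \<in> I
     \<and> (\<forall>x\<in>I. \<forall>y\<in>I. padd x y \<in> I) \<and> (\<forall>c. \<forall>x\<in>I. psc c x \<in> I)
     \<and> (\<forall>x\<in>I. \<forall>a\<in>pathalg V E s h. pmul h a x \<in> I \<and> pmul h x a \<in> I)"

definition arrow_ideal_sq :: "'v set \<Rightarrow> 'e set \<Rightarrow> ('e \<Rightarrow> 'v) \<Rightarrow> ('e \<Rightarrow> 'v) \<Rightarrow> (('v,'e) path \<Rightarrow> 'k::field) set" where
  "arrow_ideal_sq V E s h = {f \<in> pathalg V E s h. \<forall>p. f p \<noteq> 0 \<longrightarrow> 2 \<le> length (snd p)}"

definition quot_fin_dim :: "'v set \<Rightarrow> 'e set \<Rightarrow> ('e \<Rightarrow> 'v) \<Rightarrow> ('e \<Rightarrow> 'v) \<Rightarrow> (('v,'e) path \<Rightarrow> 'k::field) set \<Rightarrow> bool" where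
  "quot_fin_dim V E s h I \<longleftrightarrow> (\<exists>B. finite B \<and> B \<subseteq> pathalg V E s h \<and>
     (\<forall>x\<in>pathalg V E s h. \<exists>c. psub x (\<lambda>r. \<Sum>b\<in>B. c b * b r) \<in> I))"

text \<open>Q (a set of paths) represents a k-basis of k Gamma / I consisting of path classes,
  containing the classes of all vertices and arrows.\<close>

definition path_class_basis :: "'v set \<Rightarrow> 'e set \<Rightarrow> ('e \<Rightarrow> 'v) \<Rightarrow> ('e \<Rightarrow> 'v) \<Rightarrow> (('v,'e) path \<Rightarrow> 'k::field) set \<Rightarrow> ('v,'e) path set \<Rightarrow> bool" where
  "path_class_basis V E s h I Q \<longleftrightarrow> finite Q \<and> (\<forall>q\<in>Q. valid_path V E s h q)
     \<and> (\<forall>x\<in>pathalg V E s h. \<exists>c. psub x (\<lambda>r. \<Sum>q\<in>Q. c q * ind q r) \<in> I)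
     \<and> (\<forall>c. (\<lambda>r. \<Sum>q\<in>Q. c q * ind q r) \<in> I \<longrightarrow> (\<forall>q\<in>Q. c q = (0::'k)))
     \<and> (\<forall>v\<in>V. \<exists>q\<in>Q. psub (ind q) (ind (v, [])) \<in> I)
     \<and> (\<forall>e\<in>E. \<exists>q\<in>Q. psub (ind q) (ind (s e, [e])) \<in> I)"

text \<open>Differential operators k Gamma -> k Gamma / I, represented by representative-valued maps
  (values in k Gamma, identities required modulo I).\<close>

definition diff_op :: "'v set \<Rightarrow> 'e set \<Rightarrow> ('e \<Rightarrow> 'v) \<Rightarrow> ('e \<Rightarrow> 'v) \<Rightarrow> (('v,'e) path \<Rightarrow> 'k::field) set
     \<Rightarrow> ((('v,'e) path \<Rightarrow> 'k) \<Rightarrow> (('v,'e) path \<Rightarrow> 'k)) \<Rightarrow> bool" where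
  "diff_op V E s h I D \<longleftrightarrow>
     (\<forall>x\<in>pathalg V E s h. D x \<in> pathalg V E s h)
     \<and> (\<forall>x\<in>pathalg V E s h. \<forall>y\<in>pathalg V E s h. psub (D (padd x y)) (padd (D x) (D y)) \<in> I)
     \<and> (\<forall>c. \<forall>x\<in>pathalg V E s h. psub (D (psc c x)) (psc c (D x)) \<in> I)
     \<and> (\<forall>x\<in>pathalg V E s h. \<forall>y\<in>pathalg V E s h.
          psub (D (pmul h x y)) (padd (pmul h (D x) y) (pmul h x (D y))) \<in> I)"

definition Der :: "'v set \<Rightarrow> 'e set \<Rightarrow> ('e \<Rightarrow> 'v) \<Rightarrow> ('e \<Rightarrow> 'v) \<Rightarrow> (('v,'e) path \<Rightarrow> 'k::field) set
     \<Rightarrow> ((('v,'e) path \<Rightarrow> 'k) \<Rightarrow> (('v,'e) path \<Rightarrow> 'k)) set" where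
  "Der V E s h I = {D. diff_op V E s h I D}"

definition Inn :: "'v set \<Rightarrow> 'e set \<Rightarrow> ('e \<Rightarrow> 'v) \<Rightarrow> ('e \<Rightarrow> 'v) \<Rightarrow> (('v,'e) path \<Rightarrow> 'k::field) set
     \<Rightarrow> ((('v,'e) path \<Rightarrow> 'k) \<Rightarrow> (('v,'e) path \<Rightarrow> 'k)) set" where
  "Inn V E s h I = {D \<in> Der V E s h I. \<exists>m\<in>pathalg V E s h. \<forall>x\<in>pathalg V E s h.
       psub (D x) (psub (pmul h m x) (pmul h x m)) \<in> I}"

definition Dadd :: "('a \<Rightarrow> 'b \<Rightarrow> 'k::field) \<Rightarrow> ('a \<Rightarrow> 'b \<Rightarrow> 'k) \<Rightarrow> 'a \<Rightarrow> 'b \<Rightarrow> 'k" where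
  "Dadd D1 D2 = (\<lambda>x. padd (D1 x) (D2 x))"

definition Dsc :: "'k::field \<Rightarrow> ('a \<Rightarrow> 'b \<Rightarrow> 'k) \<Rightarrow> 'a \<Rightarrow> 'b \<Rightarrow> 'k" where
  "Dsc c D = (\<lambda>x. psc c (D x))"

definition Dzero :: "'a \<Rightarrow> 'b \<Rightarrow> 'k::field" where
  "Dzero = (\<lambda>x. pzero)"

definition center_rep :: "'v set \<Rightarrow> 'e set \<Rightarrow> ('e \<Rightarrow> 'v) \<Rightarrow> ('e \<Rightarrow> 'v) \<Rightarrow> (('v,'e) path \<Rightarrow> 'k::field) set
     \<Rightarrow> (('v,'e) path \<Rightarrow> 'k) set" where
  "center_rep V E s h I = {z \<in> pathalg V E s h. \<forall>y\<in>pathalg V E s h. psub (pmul h z y) (pmul h y z) \<in> I}"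

text \<open>Dimension of a quotient S/W of k-vector spaces (W subspace of S inside an ambient space
  with operations sc, ad, z): the largest number of elements of S that are linearly
  independent modulo W.\<close>

definition indep_mod :: "('k::field \<Rightarrow> 'x \<Rightarrow> 'x) \<Rightarrow> ('x \<Rightarrow> 'x \<Rightarrow> 'x) \<Rightarrow> 'x \<Rightarrow> 'x set \<Rightarrow> 'x list \<Rightarrow> bool" where
  "indep_mod sc ad z W xs \<longleftrightarrow>
     (\<forall>c::nat \<Rightarrow> 'k. foldr (\<lambda>i acc. ad (sc (c i) (xs ! i)) acc) [0..<length xs] z \<in> W
        \<longrightarrow> (\<forall>i<length xs. c i = 0))"

definition qdim :: "('k::field \<Rightarrow> 'x \<Rightarrow> 'x) \<Rightarrow> ('x \<Rightarrow> 'x \<Rightarrow> 'x) \<Rightarrow> 'x \<Rightarrow> 'x set \<Rightarrow> 'x set \<Rightarrow> nat" where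
  "qdim sc ad z S W = (GREATEST n. \<exists>xs. length xs = n \<and> set xs \<subseteq> S \<and> indep_mod sc ad z W xs)"

definition H1_dim :: "'v set \<Rightarrow> 'e set \<Rightarrow> ('e \<Rightarrow> 'v) \<Rightarrow> ('e \<Rightarrow> 'v) \<Rightarrow> (('v,'e) path \<Rightarrow> 'k::field) set \<Rightarrow> nat" where
  "H1_dim V E s h I = qdim (Dsc :: 'k \<Rightarrow> _) Dadd Dzero (Der V E s h I) (Inn V E s h I)"

definition center_dim :: "'v set \<Rightarrow> 'e set \<Rightarrow> ('e \<Rightarrow> 'v) \<Rightarrow> ('e \<Rightarrow> 'v) \<Rightarrow> (('v,'e) path \<Rightarrow> 'k::field) set \<Rightarrow> nat" where
  "center_dim V E s h I = qdim (psc :: 'k \<Rightarrow> _) padd pzero (center_rep V E s h I) I"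

text \<open>The operator D_{r,q}, as the set of all its representatives (one element of H^1-level
  operators, i.e. a class of Der modulo maps with values in I).\<close>

definition Dop :: "'v set \<Rightarrow> 'e set \<Rightarrow> ('e \<Rightarrow> 'v) \<Rightarrow> ('e \<Rightarrow> 'v) \<Rightarrow> (('v,'e) path \<Rightarrow> 'k::field) set
     \<Rightarrow> 'e \<Rightarrow> ('v,'e) path \<Rightarrow> ((('v,'e) path \<Rightarrow> 'k) \<Rightarrow> (('v,'e) path \<Rightarrow> 'k)) set" where
  "Dop V E s h I r q = {D \<in> Der V E s h I.
       psub (D (ind (s r, [r]))) (ind q) \<in> I
     \<and> (\<forall>e\<in>E. e \<noteq> r \<longrightarrow> D (ind (s e, [e])) \<in> I)
     \<and> (\<forall>v\<in>V. D (ind (v, [])) \<in> I)}"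

definition B2 :: "'v set \<Rightarrow> 'e set \<Rightarrow> ('e \<Rightarrow> 'v) \<Rightarrow> ('e \<Rightarrow> 'v) \<Rightarrow> (('v,'e) path \<Rightarrow> 'k::field) set
     \<Rightarrow> ('v,'e) path set \<Rightarrow> ((('v,'e) path \<Rightarrow> 'k) \<Rightarrow> (('v,'e) path \<Rightarrow> 'k)) set set" where
  "B2 V E s h I Q = (\<lambda>(r, q). Dop V E s h I r q) `
     {(r, q). r \<in> E \<and> q \<in> Q \<and> s r = path_start q \<and> h r = path_end h q}"

definition QC :: "('e \<Rightarrow> 'v) \<Rightarrow> ('v,'e) path set \<Rightarrow> ('v,'e) path set" where
  "QC h Q = {q \<in> Q. path_start q = path_end h q}"

end

theory Submission
  imports Defs "HOL-Library.Function_Algebras" "HOL.Vector_Spaces"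
begin


lemma foldr_sum_gen: "foldr (\<lambda>i acc. f i + acc) xs a = sum_list (map f xs) + (a::'a::monoid_add)"
  by (induct xs) (auto simp: add.assoc)

lemma foldr_sum: "foldr (\<lambda>i acc. f i + acc) [0..<n] 0 = (\<Sum>i<n. (f i :: 'a::comm_monoid_add))"
  using foldr_sum_gen[of f "[0..<n]" 0]
  by (simp add: sum_set_upt_conv_sum_list_nat[symmetric] atLeast0LessThan)

lemma sum_lessThan_add_split: "(\<Sum>i<m+(n::nat). f i) = (\<Sum>i<m. f i) + (\<Sum>j<n. (f (m+j) :: 'a::comm_monoid_add))"
  by (induct n) (auto simp: add.assoc)

context vector_space begin

definition lcomb :: "(nat \<Rightarrow> 'a) \<Rightarrow> 'b list \<Rightarrow> 'b" where
  "lcomb c xs = (\<Sum>i<length xs. c i *s xs ! i)"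

definition indepW :: "'b set \<Rightarrow> 'b list \<Rightarrow> bool" where
  "indepW W xs \<longleftrightarrow> (\<forall>c. lcomb c xs \<in> W \<longrightarrow> (\<forall>i<length xs. c i = 0))"

definition modspan :: "'b set \<Rightarrow> 'b set \<Rightarrow> 'b set" where
  "modspan B W = {x. \<exists>a\<in>span B. x - a \<in> W}"

lemma indep_mod_eq: "indep_mod scale (+) 0 W xs = indepW W xs"
  unfolding indep_mod_def indepW_def lcomb_def foldr_sum ..

lemma indepWD: "indepW W xs \<Longrightarrow> lcomb c xs \<in> W \<Longrightarrow> i < length xs \<Longrightarrow> c i = 0"
  unfolding indepW_def by blast

lemma qdim_eq_def: "qdim scale (+) 0 S W = (GREATEST n. \<exists>xs. length xs = n \<and> set xs \<subseteq> S \<and> indepW W xs)"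
  unfolding qdim_def indep_mod_eq ..

lemma lcomb_span: "lcomb c xs \<in> span (set xs)"
  unfolding lcomb_def by (rule span_sum, rule span_scale, rule span_base) auto

lemma lcomb_append: "lcomb c (xs @ ys) = lcomb c xs + lcomb (\<lambda>j. c (length xs + j)) ys"
  unfolding lcomb_def by (simp add: sum_lessThan_add_split nth_append)

lemma modspan_mono: "W0 \<subseteq> W \<Longrightarrow> modspan B W0 \<subseteq> modspan B W"
  unfolding modspan_def by auto

lemma indepW_bound:
  assumes W: "subspace W" and B: "finite B" and S: "S \<subseteq> modspan B W"
    and xs: "set xs \<subseteq> S" and ind: "indepW W xs"
  shows "length xs \<le> card B"
proof -
  let ?n = "length xs"
  have "\<forall>i<?n. \<exists>b\<in>span B. xs!i - b \<in> W" using xs S unfolding modspan_def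
    by (auto dest!: nth_mem)
  then obtain f where f: "\<And>i. i < ?n \<Longrightarrow> f i \<in> span B \<and> xs!i - f i \<in> W" by metis
  have inj: "inj_on f {..<?n}"
  proof (rule inj_onI, rule ccontr)
    fix i j assume i: "i \<in> {..<?n}" and j: "j \<in> {..<?n}" and eq: "f i = f j" and ne: "i \<noteq> j"
    define c where "c k = (if k = i then 1 else if k = j then -1 else (0::'a))" for k
    have ck: "c k *s xs!k = (if k = i then xs!k else 0) - (if k = j then xs!k else 0)" for k
      using ne by (auto simp: c_def)
    have "lcomb c xs = xs!i - xs!j"
      unfolding lcomb_def ck sum_subtractf using i j by simp
    also have "\<dots> = (xs!i - f i) - (xs!j - f j)" using eq by simp
    also have "\<dots> \<in> W" using f i j W by (auto intro: subspace_diff)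
    finally have "c i = 0" using indepWD[OF ind] i by simp
    then show False by (simp add: c_def)
  qed
  have indT: "independent (f ` {..<?n})"
  proof
    assume "dependent (f ` {..<?n})"
    then obtain t u where t: "finite t" "t \<subseteq> f ` {..<?n}" "(\<Sum>v\<in>t. u v *s v) = 0"
      and v: "\<exists>v\<in>t. u v \<noteq> 0" unfolding dependent_explicit by blast
    define c where "c k = (if f k \<in> t then u (f k) else 0)" for k
    have split: "c k *s xs!k = c k *s f k + c k *s (xs!k - f k)" for k
      by (simp add: scale_right_distrib[symmetric])
    have "(\<Sum>k<?n. c k *s f k) = (\<Sum>k\<in>{k\<in>{..<?n}. f k \<in> t}. u (f k) *s f k)"
      by (rule sum.mono_neutral_cong_right) (auto simp: c_def)
    also have "\<dots> = (\<Sum>v\<in>f ` {k\<in>{..<?n}. f k \<in> t}. u v *s v)"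
      by (subst sum.reindex) (auto intro: inj_on_subset[OF inj])
    also have "f ` {k\<in>{..<?n}. f k \<in> t} = t" using t(2) by auto
    finally have s1: "(\<Sum>k<?n. c k *s f k) = 0" using t(3) by simp
    have s2: "(\<Sum>k<?n. c k *s (xs!k - f k)) \<in> W"
      using f by (auto intro!: subspace_sum[OF W] subspace_scale[OF W])
    have "lcomb c xs \<in> W" unfolding lcomb_def split sum.distrib s1 using s2 by simp
    then have c0: "\<forall>k<?n. c k = 0" using indepWD[OF ind] by simp
    from v obtain w where w: "w \<in> t" "u w \<noteq> 0" by blast
    then obtain k where "k < ?n" "w = f k" using t(2) by auto
    then show False using c0 w by (auto simp: c_def)
  qed
  have "f ` {..<?n} \<subseteq> span B" using f by auto
  from independent_span_bound[OF B indT this] have "card (f ` {..<?n}) \<le> card B" by blast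
  then show ?thesis using card_image[OF inj] by simp
qed

lemma qdim_eqI:
  assumes W: "subspace W" and bs: "set bs \<subseteq> S" and ind: "indepW W bs"
    and sp: "S \<subseteq> modspan (set bs) W"
  shows "qdim scale (+) 0 S W = length bs"
  unfolding qdim_eq_def
proof (rule Greatest_equality)
  show "\<exists>xs. length xs = length bs \<and> set xs \<subseteq> S \<and> indepW W xs" using bs ind by blast
  fix n assume "\<exists>xs. length xs = n \<and> set xs \<subseteq> S \<and> indepW W xs"
  then obtain xs where xs: "length xs = n" "set xs \<subseteq> S" "indepW W xs" by blast
  have "n \<le> card (set bs)" using indepW_bound[OF W finite_set sp xs(2,3)] xs(1) by simp
  also have "\<dots> \<le> length bs" by (rule card_length)
  finally show "n \<le> length bs" .
qed

lemma qdim_basis: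
  assumes W: "subspace W" and B: "finite B" and S: "S \<subseteq> modspan B W"
  obtains bs where "set bs \<subseteq> S" "indepW W bs" "length bs = qdim scale (+) 0 S W"
    "S \<subseteq> modspan (set bs) W"
proof -
  let ?P = "\<lambda>n. \<exists>xs. length xs = n \<and> set xs \<subseteq> S \<and> indepW W xs"
  have bound: "\<And>n. ?P n \<Longrightarrow> n \<le> card B" using indepW_bound[OF W B S] by blast
  have P0: "?P 0" by (rule exI[of _ "[]"]) (auto simp: indepW_def)
  have "?P (GREATEST n. ?P n)" by (rule GreatestI_nat[where P="?P", OF P0 bound])
  then obtain xs where xs: "length xs = qdim scale (+) 0 S W" "set xs \<subseteq> S" "indepW W xs"
    unfolding qdim_eq_def by blast
  have "S \<subseteq> modspan (set xs) W"
  proof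
    fix x assume x: "x \<in> S"
    show "x \<in> modspan (set xs) W"
    proof (rule ccontr)
      assume nx: "x \<notin> modspan (set xs) W"
      have "indepW W (xs @ [x])"
        unfolding indepW_def
      proof (rule allI, rule impI)
        fix c assume cW: "lcomb c (xs @ [x]) \<in> W"
        have lc: "lcomb c (xs @ [x]) = lcomb c xs + c (length xs) *s x"
          unfolding lcomb_append by (simp add: lcomb_def)
        have cn: "c (length xs) = 0"
        proof (rule ccontr)
          assume cne: "c (length xs) \<noteq> 0"
          have "x - (- (inverse (c (length xs)) *s lcomb c xs))
              = inverse (c (length xs)) *s lcomb c (xs @ [x])"
            unfolding lc using cne by (simp add: scale_right_distrib)
          also have "\<dots> \<in> W" using cW W by (rule subspace_scale[rotated])
          finally have "x \<in> modspan (set xs) W"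
            unfolding modspan_def using lcomb_span by (blast intro: span_neg span_scale)
          with nx show False by simp
        qed
        then have "lcomb c xs \<in> W" using cW lc by simp
        then have "\<forall>i<length xs. c i = 0" using indepWD[OF xs(3)] by simp
        then show "\<forall>i<length (xs @ [x]). c i = 0" using cn by (auto simp: less_Suc_eq)
      qed
      then have "?P (Suc (length xs))" using xs(2) x by (intro exI[of _ "xs @ [x]"]) simp
      then have "Suc (length xs) \<le> (GREATEST n. ?P n)" by (rule Greatest_le_nat[where P="?P", OF _ bound])
      then show False using xs(1) unfolding qdim_eq_def by simp
    qed
  qed
  then show ?thesis using that xs by blast
qed

lemma qdim_add:
  assumes W0: "subspace W0" and W: "subspace W" and S: "subspace S"
    and W0W: "W0 \<subseteq> W" and WS: "W \<subseteq> S"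
    and B: "finite B" and SB: "S \<subseteq> modspan B W0"
  shows "qdim scale (+) 0 S W0 = qdim scale (+) 0 S W + qdim scale (+) 0 W W0"
proof -
  have WB: "W \<subseteq> modspan B W0" using WS SB by blast
  obtain ws where ws: "set ws \<subseteq> W" "indepW W0 ws" "length ws = qdim scale (+) 0 W W0"
    "W \<subseteq> modspan (set ws) W0"
    by (rule qdim_basis[OF W0 B WB])
  have SB': "S \<subseteq> modspan B W" using SB modspan_mono[OF W0W] by blast
  obtain ys where ys: "set ys \<subseteq> S" "indepW W ys" "length ys = qdim scale (+) 0 S W"
    "S \<subseteq> modspan (set ys) W"
    by (rule qdim_basis[OF W B SB'])
  have spw: "span (set ws) \<subseteq> W" using ws(1) W by (rule span_minimal)
  have "qdim scale (+) 0 S W0 = length (ws @ ys)"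
  proof (rule qdim_eqI[OF W0])
    show "set (ws @ ys) \<subseteq> S" using ws(1) ys(1) WS by auto
    show "indepW W0 (ws @ ys)"
      unfolding indepW_def
    proof (rule allI, rule impI)
      fix c assume cW0: "lcomb c (ws @ ys) \<in> W0"
      let ?c' = "\<lambda>j. c (length ws + j)"
      have a: "lcomb c ws \<in> W" using spw lcomb_span by blast
      have "lcomb ?c' ys = lcomb c (ws @ ys) - lcomb c ws" unfolding lcomb_append by simp
      also have "\<dots> \<in> W" by (rule subspace_diff[OF W]) (use cW0 W0W a in auto)
      finally have c2W: "lcomb ?c' ys \<in> W" .
      have c2: "\<forall>j<length ys. ?c' j = 0" using indepWD[OF ys(2) c2W] by simp
      then have "lcomb ?c' ys = 0" unfolding lcomb_def by simp
      then have "lcomb c ws \<in> W0" using cW0 unfolding lcomb_append by simp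
      then have c1: "\<forall>i<length ws. c i = 0" using indepWD[OF ws(2)] by blast
      show "\<forall>i<length (ws @ ys). c i = 0"
      proof (intro allI impI)
        fix i assume "i < length (ws @ ys)"
        then show "c i = 0" using c1 c2[rule_format, of "i - length ws"]
          by (cases "i < length ws") auto
      qed
    qed
    show "S \<subseteq> modspan (set (ws @ ys)) W0"
    proof
      fix x assume x: "x \<in> S"
      then obtain a where a: "a \<in> span (set ys)" "x - a \<in> W" using ys(4) unfolding modspan_def by blast
      then obtain a' where a': "a' \<in> span (set ws)" "(x - a) - a' \<in> W0"
        using ws(4) unfolding modspan_def by blast
      have aa: "a + a' \<in> span (set (ws @ ys))"
      proof (rule span_add)
        show "a \<in> span (set (ws @ ys))" using a(1) span_mono[of "set ys" "set (ws@ys)"] by auto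
        show "a' \<in> span (set (ws @ ys))" using a'(1) span_mono[of "set ws" "set (ws@ys)"] by auto
      qed
      have "x - (a + a') \<in> W0" using a'(2) by (simp add: diff_diff_eq)
      then show "x \<in> modspan (set (ws @ ys)) W0" unfolding modspan_def using aa by blast
    qed
  qed
  then show ?thesis using ws(3) ys(3) by simp
qed

end

context vector_space_pair begin

lemma qdim_transfer:
  assumes W1: "vs1.subspace W1" and S1: "vs1.subspace S1" and W1S1: "W1 \<subseteq> S1"
    and W2: "vs2.subspace W2"
    and B: "finite B" and S1B: "S1 \<subseteq> vs1.modspan B W1"
    and add: "\<And>x y. x \<in> S1 \<Longrightarrow> y \<in> S1 \<Longrightarrow> \<phi> (x + y) = \<phi> x + \<phi> y"
    and sc: "\<And>c x. x \<in> S1 \<Longrightarrow> \<phi> (c *a x) = c *b (\<phi> x)"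
    and img: "\<And>x. x \<in> S1 \<Longrightarrow> \<phi> x \<in> S2"
    and surj: "\<And>y. y \<in> S2 \<Longrightarrow> \<exists>x\<in>S1. y - \<phi> x \<in> W2"
    and ker: "\<And>x. x \<in> S1 \<Longrightarrow> \<phi> x \<in> W2 \<longleftrightarrow> x \<in> W1"
  shows "qdim s2 (+) 0 S2 W2 = qdim s1 (+) 0 S1 W1"
proof -
  obtain bs where bs: "set bs \<subseteq> S1" "vs1.indepW W1 bs" "length bs = qdim s1 (+) 0 S1 W1"
    "S1 \<subseteq> vs1.modspan (set bs) W1"
    by (rule vs1.qdim_basis[OF W1 B S1B])
  have phi0: "\<phi> 0 = 0"
    using sc[of 0 0] vs1.subspace_0[OF S1] by simp
  have phisum: "\<phi> (sum F A) = sum (\<lambda>i. \<phi> (F i)) A" if "\<And>i. i \<in> A \<Longrightarrow> F i \<in> S1" for F and A :: "nat set"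
    using that
  proof (induct A rule: infinite_finite_induct)
    case (infinite A) then show ?case by (simp add: phi0)
  next
    case empty then show ?case by (simp add: phi0)
  next
    case (insert a A)
    have "sum F A \<in> S1" using insert by (auto intro: vs1.subspace_sum[OF S1])
    then show ?case using insert by (simp add: add)
  qed
  have spS1: "vs1.span (set bs) \<subseteq> S1" using bs(1) S1 by (rule vs1.span_minimal)
  have phil: "\<phi> (vs1.lcomb c bs) = vs2.lcomb c (map \<phi> bs)" for c
  proof -
    have "\<phi> (\<Sum>i<length bs. c i *a bs!i) = (\<Sum>i<length bs. \<phi> (c i *a bs!i))"
      by (rule phisum) (use bs(1) in \<open>auto intro!: vs1.subspace_scale[OF S1]\<close>)
    also have "\<dots> = (\<Sum>i<length bs. c i *b \<phi> (bs!i))"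
      by (rule sum.cong) (use bs(1) in \<open>auto intro!: sc\<close>)
    finally show ?thesis by (simp add: vs1.lcomb_def vs2.lcomb_def)
  qed
  have "qdim s2 (+) 0 S2 W2 = length (map \<phi> bs)"
  proof (rule vs2.qdim_eqI[OF W2])
    show "set (map \<phi> bs) \<subseteq> S2" using bs(1) img by auto
    show "vs2.indepW W2 (map \<phi> bs)"
      unfolding vs2.indepW_def
    proof (rule allI, rule impI)
      fix c assume "vs2.lcomb c (map \<phi> bs) \<in> W2"
      then have "\<phi> (vs1.lcomb c bs) \<in> W2" by (simp add: phil)
      moreover have "vs1.lcomb c bs \<in> S1" using spS1 vs1.lcomb_span by blast
      ultimately have "vs1.lcomb c bs \<in> W1" using ker by blast
      then show "\<forall>i<length (map \<phi> bs). c i = 0" using vs1.indepWD[OF bs(2)] by simp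
    qed
    show "S2 \<subseteq> vs2.modspan (set (map \<phi> bs)) W2"
    proof
      fix y assume y: "y \<in> S2"
      then obtain x where x: "x \<in> S1" "y - \<phi> x \<in> W2" using surj by blast
      then obtain a where a: "a \<in> vs1.span (set bs)" "x - a \<in> W1" using bs(4) unfolding vs1.modspan_def by blast
      have aS: "a \<in> S1" using a(1) spS1 by blast
      have pa: "a \<in> S1 \<and> \<phi> a \<in> vs2.span (\<phi> ` set bs)"
      proof (rule vs1.span_induct[OF a(1), where P="\<lambda>a. a \<in> S1 \<and> \<phi> a \<in> vs2.span (\<phi> ` set bs)"])
        show "\<And>x. x \<in> set bs \<Longrightarrow> x \<in> S1 \<and> \<phi> x \<in> vs2.span (\<phi> ` set bs)"
          using bs(1) by (auto intro: vs2.span_base)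
      next
        show "vs1.subspace {a. a \<in> S1 \<and> \<phi> a \<in> vs2.span (\<phi> ` set bs)}"
          unfolding vs1.subspace_def
        proof (intro conjI ballI allI)
          show "0 \<in> {a. a \<in> S1 \<and> \<phi> a \<in> vs2.span (\<phi> ` set bs)}"
            using vs1.subspace_0[OF S1] phi0 vs2.span_zero by simp
        next
          fix x y assume x: "x \<in> {a. a \<in> S1 \<and> \<phi> a \<in> vs2.span (\<phi> ` set bs)}"
            and y: "y \<in> {a. a \<in> S1 \<and> \<phi> a \<in> vs2.span (\<phi> ` set bs)}"
          then show "x + y \<in> {a. a \<in> S1 \<and> \<phi> a \<in> vs2.span (\<phi> ` set bs)}"
            using add[of x y] vs1.subspace_add[OF S1, of x y] vs2.span_add[of "\<phi> x" _ "\<phi> y"] by simp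
        next
          fix c x assume x: "x \<in> {a. a \<in> S1 \<and> \<phi> a \<in> vs2.span (\<phi> ` set bs)}"
          then show "c *a x \<in> {a. a \<in> S1 \<and> \<phi> a \<in> vs2.span (\<phi> ` set bs)}"
            using sc[of x c] vs1.subspace_scale[OF S1, of x c] vs2.span_scale[of "\<phi> x" _ c] by simp
        qed
      qed
      have xaS: "x - a \<in> S1" using a(2) W1S1 by blast
      have "\<phi> (x - a) + \<phi> a = \<phi> x" using add[OF xaS aS] by simp
      then have eq: "y - \<phi> a = (y - \<phi> x) + \<phi> (x - a)" by (simp add: algebra_simps)
      have "\<phi> (x - a) \<in> W2" using ker[OF xaS] a(2) by blast
      then have "y - \<phi> a \<in> W2" unfolding eq by (rule vs2.subspace_add[OF W2 x(2)])
      then show "y \<in> vs2.modspan (set (map \<phi> bs)) W2"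
        unfolding vs2.modspan_def using pa by auto
    qed
  qed
  then show ?thesis using bs(3) by simp
qed

end


lemma sum_fun_apply: "(\<Sum>i\<in>A. F i) x = (\<Sum>i\<in>A. F i x)"
  by (induct A rule: infinite_finite_induct) auto

interpretation PV: vector_space "psc :: 'k::field \<Rightarrow> ('a \<Rightarrow> 'k) \<Rightarrow> 'a \<Rightarrow> 'k"
  by unfold_locales (auto simp: psc_def fun_eq_iff algebra_simps)

interpretation DV: vector_space "Dsc :: 'k::field \<Rightarrow> ('b \<Rightarrow> 'a \<Rightarrow> 'k) \<Rightarrow> 'b \<Rightarrow> 'a \<Rightarrow> 'k"
  by unfold_locales (auto simp: Dsc_def psc_def fun_eq_iff algebra_simps)

interpretation PDV: vector_space_pair "psc :: 'k::field \<Rightarrow> ('a \<Rightarrow> 'k) \<Rightarrow> 'a \<Rightarrow> 'k"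
  "Dsc :: 'k::field \<Rightarrow> ('b \<Rightarrow> 'a \<Rightarrow> 'k) \<Rightarrow> 'b \<Rightarrow> 'a \<Rightarrow> 'k" ..

lemma padd_eq: "padd = (+)" by (simp add: padd_def fun_eq_iff)
lemma psub_eq: "psub = (-)" by (simp add: psub_def fun_eq_iff)
lemma pzero_eq: "pzero = 0" by (simp add: pzero_def fun_eq_iff)
lemma Dadd_eq: "Dadd = (+)" by (simp add: Dadd_def padd_def fun_eq_iff)
lemma Dzero_eq: "Dzero = 0" by (simp add: Dzero_def pzero_def fun_eq_iff)
lemma psc_apply[simp]: "psc c f p = c * f p" by (simp add: psc_def)
lemma Dsc_apply[simp]: "Dsc c D x = psc c (D x)" by (simp add: Dsc_def)
lemma ind_apply: "ind q p = (if p = q then 1 else 0)" by (simp add: ind_def)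

definition fs :: "('a \<Rightarrow> 'k::field) \<Rightarrow> bool" where
  "fs f \<longleftrightarrow> finite {p. f p \<noteq> 0}"

lemma fs_add[simp]: "fs f \<Longrightarrow> fs g \<Longrightarrow> fs (f + g)"
  unfolding fs_def by (rule finite_subset[of _ "{p. f p \<noteq> 0} \<union> {p. g p \<noteq> 0}"]) auto
lemma fs_diff[simp]: "fs f \<Longrightarrow> fs g \<Longrightarrow> fs (f - g)"
  unfolding fs_def by (rule finite_subset[of _ "{p. f p \<noteq> 0} \<union> {p. g p \<noteq> 0}"]) auto
lemma fs_psc[simp]: "fs f \<Longrightarrow> fs (psc c f)"
  unfolding fs_def by (rule finite_subset[of _ "{p. f p \<noteq> 0}"]) auto
lemma fs_uminus[simp]: "fs f \<Longrightarrow> fs (- f)"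
  unfolding fs_def by (rule finite_subset[of _ "{p. f p \<noteq> 0}"]) auto
lemma fs_zero[simp]: "fs 0" unfolding fs_def by simp
lemma fs_ind[simp]: "fs (ind q)"
  unfolding fs_def by (rule finite_subset[of _ "{q}"]) (auto simp: ind_def)
lemma fs_sum: "(\<And>i. i \<in> A \<Longrightarrow> fs (F i)) \<Longrightarrow> fs (\<Sum>i\<in>A. F i)"
  by (induct A rule: infinite_finite_induct) auto

lemma fs_expand:
  assumes "fs f" "finite A" "{p. f p \<noteq> 0} \<subseteq> A"
  shows "f = (\<Sum>p\<in>A. psc (f p) (ind p))"
proof
  fix r
  have "(\<Sum>p\<in>A. psc (f p) (ind p)) r = (\<Sum>p\<in>A. if p = r then f p else 0)"
    unfolding sum_fun_apply by (rule sum.cong) (auto simp: ind_def)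
  also have "\<dots> = f r" using assms by (auto simp: sum.delta)
  finally show "f r = (\<Sum>p\<in>A. psc (f p) (ind p)) r" by simp
qed

lemma pathalg_fs: "x \<in> pathalg V E s h \<Longrightarrow> fs x"
  by (simp add: pathalg_def fs_def)

lemma pathalg_valid: "x \<in> pathalg V E s h \<Longrightarrow> x p \<noteq> 0 \<Longrightarrow> valid_path V E s h p"
  unfolding pathalg_def by blast

lemma pathalg_subspace: "PV.subspace (pathalg V E s h :: (('v,'e) path \<Rightarrow> 'k::field) set)"
  unfolding PV.subspace_def
proof (intro conjI ballI allI)
  show "0 \<in> pathalg V E s h" by (simp add: pathalg_def)
next
  fix x y :: "('v,'e) path \<Rightarrow> 'k" assume "x \<in> pathalg V E s h" "y \<in> pathalg V E s h"
  then show "x + y \<in> pathalg V E s h"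
    using fs_add[of x y] unfolding pathalg_def fs_def
    by (auto simp del: plus_fun_apply) (metis add.left_neutral add.right_neutral plus_fun_apply)
next
  fix c and x :: "('v,'e) path \<Rightarrow> 'k" assume "x \<in> pathalg V E s h"
  then show "psc c x \<in> pathalg V E s h"
    using fs_psc[of x c] by (auto simp: pathalg_def fs_def)
qed

lemma ind_pathalg: "valid_path V E s h q \<Longrightarrow> ind q \<in> pathalg V E s h"
  using fs_ind[of q] by (auto simp: pathalg_def fs_def ind_def)

definition cm :: "('e \<Rightarrow> 'v) \<Rightarrow> ('v,'e) path \<Rightarrow> ('v,'e) path \<Rightarrow> ('v,'e) path \<Rightarrow> 'k::field" where
  "cm h p q r = (if path_cat h p q = Some r then 1 else 0)"

lemma pmul_eq:
  assumes "finite A" "finite B" "{p. f p \<noteq> 0} \<subseteq> A" "{q. g q \<noteq> 0} \<subseteq> B"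
  shows "pmul h f g r = (\<Sum>p\<in>A. \<Sum>q\<in>B. f p * g q * cm h p q r)"
proof -
  let ?T = "\<lambda>p q. f p * g q * cm h p q r"
  have fA: "finite {p. f p \<noteq> 0}" and fB: "finite {q. g q \<noteq> 0}"
    using assms finite_subset by auto
  have "pmul h f g r = (\<Sum>p\<in>{p. f p \<noteq> 0}. \<Sum>q\<in>{q. g q \<noteq> 0}. ?T p q)"
    unfolding pmul_def cm_def by (intro sum.cong) auto
  also have "\<dots> = (\<Sum>p\<in>{p. f p \<noteq> 0}. \<Sum>q\<in>B. ?T p q)"
    by (intro sum.cong refl sum.mono_neutral_left) (use assms in auto)
  also have "\<dots> = (\<Sum>p\<in>A. \<Sum>q\<in>B. ?T p q)"
    by (intro sum.mono_neutral_left) (use assms in auto)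
  finally show ?thesis .
qed

lemma pmul_add_left:
  assumes "fs f" "fs g" "fs k"
  shows "pmul h (f + g) k = pmul h f k + pmul h g k"
proof
  fix r
  let ?A = "{p. f p \<noteq> 0} \<union> {p. g p \<noteq> 0}" and ?B = "{q. k q \<noteq> 0}"
  have fin: "finite ?A" "finite ?B" using assms by (auto simp: fs_def)
  have "pmul h (f + g) k r = (\<Sum>p\<in>?A. \<Sum>q\<in>?B. (f + g) p * k q * cm h p q r)"
    by (rule pmul_eq) (use fin in auto)
  moreover have "pmul h f k r = (\<Sum>p\<in>?A. \<Sum>q\<in>?B. f p * k q * cm h p q r)"
    by (rule pmul_eq) (use fin in auto)
  moreover have "pmul h g k r = (\<Sum>p\<in>?A. \<Sum>q\<in>?B. g p * k q * cm h p q r)"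
    by (rule pmul_eq) (use fin in auto)
  ultimately show "pmul h (f + g) k r = (pmul h f k + pmul h g k) r"
    by (simp add: sum.distrib[symmetric] algebra_simps)
qed

lemma pmul_add_right:
  assumes "fs f" "fs g" "fs k"
  shows "pmul h k (f + g) = pmul h k f + pmul h k g"
proof
  fix r
  let ?B = "{p. f p \<noteq> 0} \<union> {p. g p \<noteq> 0}" and ?A = "{q. k q \<noteq> 0}"
  have fin: "finite ?A" "finite ?B" using assms by (auto simp: fs_def)
  have "pmul h k (f + g) r = (\<Sum>p\<in>?A. \<Sum>q\<in>?B. k p * (f + g) q * cm h p q r)"
    by (rule pmul_eq) (use fin in auto)
  moreover have "pmul h k f r = (\<Sum>p\<in>?A. \<Sum>q\<in>?B. k p * f q * cm h p q r)"
    by (rule pmul_eq) (use fin in auto)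
  moreover have "pmul h k g r = (\<Sum>p\<in>?A. \<Sum>q\<in>?B. k p * g q * cm h p q r)"
    by (rule pmul_eq) (use fin in auto)
  ultimately show "pmul h k (f + g) r = (pmul h k f + pmul h k g) r"
    by (simp add: sum.distrib[symmetric] algebra_simps)
qed

lemma pmul_psc_left:
  assumes "fs f" "fs k"
  shows "pmul h (psc c f) k = psc c (pmul h f k)"
proof
  fix r
  let ?A = "{p. f p \<noteq> 0}" and ?B = "{q. k q \<noteq> 0}"
  have fin: "finite ?A" "finite ?B" using assms by (auto simp: fs_def)
  have "pmul h (psc c f) k r = (\<Sum>p\<in>?A. \<Sum>q\<in>?B. psc c f p * k q * cm h p q r)"
    by (rule pmul_eq) (use fin in auto)
  moreover have "pmul h f k r = (\<Sum>p\<in>?A. \<Sum>q\<in>?B. f p * k q * cm h p q r)"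
    by (rule pmul_eq) (use fin in auto)
  ultimately show "pmul h (psc c f) k r = psc c (pmul h f k) r"
    by (simp add: sum_distrib_left algebra_simps)
qed

lemma pmul_psc_right:
  assumes "fs f" "fs k"
  shows "pmul h k (psc c f) = psc c (pmul h k f)"
proof
  fix r
  let ?B = "{p. f p \<noteq> 0}" and ?A = "{q. k q \<noteq> 0}"
  have fin: "finite ?A" "finite ?B" using assms by (auto simp: fs_def)
  have "pmul h k (psc c f) r = (\<Sum>p\<in>?A. \<Sum>q\<in>?B. k p * psc c f q * cm h p q r)"
    by (rule pmul_eq) (use fin in auto)
  moreover have "pmul h k f r = (\<Sum>p\<in>?A. \<Sum>q\<in>?B. k p * f q * cm h p q r)"
    by (rule pmul_eq) (use fin in auto)
  ultimately show "pmul h k (psc c f) r = psc c (pmul h k f) r"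
    by (simp add: sum_distrib_left algebra_simps)
qed

lemma pmul_zero_left[simp]: "pmul h 0 k = 0"
  by (simp add: pmul_def fun_eq_iff)
lemma pmul_zero_right[simp]: "pmul h k 0 = 0"
  by (simp add: pmul_def fun_eq_iff)

lemma psc_minus_one: "psc (-1) f = - f" by (simp add: fun_eq_iff)

lemma pmul_diff_left:
  assumes "fs f" "fs g" "fs k"
  shows "pmul h (f - g) k = pmul h f k - pmul h g k"
proof -
  have e: "f - g = f + psc (-1) g" by (simp add: psc_minus_one)
  have "pmul h (f - g) k = pmul h f k + pmul h (psc (-1) g) k"
    unfolding e by (rule pmul_add_left) (use assms in auto)
  also have "pmul h (psc (-1) g) k = psc (-1) (pmul h g k)"
    by (rule pmul_psc_left) (use assms in auto)
  finally show ?thesis by (simp only: psc_minus_one diff_conv_add_uminus)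
qed

lemma pmul_diff_right:
  assumes "fs f" "fs g" "fs k"
  shows "pmul h k (f - g) = pmul h k f - pmul h k g"
proof -
  have e: "f - g = f + psc (-1) g" by (simp add: psc_minus_one)
  have "pmul h k (f - g) = pmul h k f + pmul h k (psc (-1) g)"
    unfolding e by (rule pmul_add_right) (use assms in auto)
  also have "pmul h k (psc (-1) g) = psc (-1) (pmul h k g)"
    by (rule pmul_psc_right) (use assms in auto)
  finally show ?thesis by (simp only: psc_minus_one diff_conv_add_uminus)
qed

lemma pmul_sum_left:
  assumes "\<And>i. i \<in> A \<Longrightarrow> fs (F i)" "fs k"
  shows "pmul h (\<Sum>i\<in>A. F i) k = (\<Sum>i\<in>A. pmul h (F i) k)"
  using assms
proof (induct A rule: infinite_finite_induct)
  case (insert a A)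
  have "pmul h (\<Sum>i\<in>insert a A. F i) k = pmul h (F a + (\<Sum>i\<in>A. F i)) k"
    by (rule arg_cong[where f="\<lambda>z. pmul h z k"], rule sum.insert[OF insert(1,2)])
  also have "\<dots> = pmul h (F a) k + pmul h (\<Sum>i\<in>A. F i) k"
    by (rule pmul_add_left) (use insert in \<open>auto intro: fs_sum\<close>)
  also have "\<dots> = (\<Sum>i\<in>insert a A. pmul h (F i) k)"
    using insert by (simp add: sum.insert[OF insert(1,2)])
  finally show ?case .
qed auto

lemma pmul_sum_right:
  assumes "\<And>i. i \<in> A \<Longrightarrow> fs (F i)" "fs k"
  shows "pmul h k (\<Sum>i\<in>A. F i) = (\<Sum>i\<in>A. pmul h k (F i))"
  using assms
proof (induct A rule: infinite_finite_induct)
  case (insert a A)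
  have "pmul h k (\<Sum>i\<in>insert a A. F i) = pmul h k (F a + (\<Sum>i\<in>A. F i))"
    by (rule arg_cong[where f="\<lambda>z. pmul h k z"], rule sum.insert[OF insert(1,2)])
  also have "\<dots> = pmul h k (F a) + pmul h k (\<Sum>i\<in>A. F i)"
    by (rule pmul_add_right) (use insert in \<open>auto intro: fs_sum\<close>)
  also have "\<dots> = (\<Sum>i\<in>insert a A. pmul h k (F i))"
    using insert by (simp add: sum.insert[OF insert(1,2)])
  finally show ?case .
qed auto

lemma cm_ind: "pmul h (ind a) (ind b) r = cm h a b r"
proof -
  have "pmul h (ind a) (ind b) r = (\<Sum>p\<in>{a}. \<Sum>q\<in>{b}. ind a p * ind b q * cm h p q r)"
    by (rule pmul_eq) (auto simp: ind_def)
  then show ?thesis by (simp add: ind_def)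
qed

lemma pmul_ind: "pmul h (ind a) (ind b) =
   (if path_end h a = fst b then ind (fst a, snd a @ snd b) else 0)"
  by (auto simp: fun_eq_iff cm_ind cm_def path_cat_def ind_apply)

lemma pmul_expand:
  assumes "fs f" "fs g" "finite A" "finite B" "{p. f p \<noteq> 0} \<subseteq> A" "{q. g q \<noteq> 0} \<subseteq> B"
  shows "pmul h f g = (\<Sum>p\<in>A. \<Sum>q\<in>B. psc (f p * g q) (pmul h (ind p) (ind q)))"
proof
  fix r
  show "pmul h f g r = (\<Sum>p\<in>A. \<Sum>q\<in>B. psc (f p * g q) (pmul h (ind p) (ind q))) r"
    unfolding pmul_eq[OF assms(3-6)] sum_fun_apply by (simp add: cm_ind)
qed

lemma fs_pmul:
  assumes "fs f" "fs g"
  shows "fs (pmul h f g)"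
proof -
  let ?A = "{p. f p \<noteq> 0}" and ?B = "{q. g q \<noteq> 0}"
  have fin: "finite ?A" "finite ?B" using assms by (auto simp: fs_def)
  have "{r. pmul h f g r \<noteq> 0} \<subseteq> (\<lambda>(p,q). (fst p, snd p @ snd q)) ` (?A \<times> ?B)"
  proof
    fix r assume "r \<in> {r. pmul h f g r \<noteq> 0}"
    then have "(\<Sum>p\<in>?A. \<Sum>q\<in>?B. f p * g q * cm h p q r) \<noteq> 0"
      using pmul_eq[OF fin, of f g h r] by simp
    then obtain p where p: "p \<in> ?A" "(\<Sum>q\<in>?B. f p * g q * cm h p q r) \<noteq> 0"
      using sum.not_neutral_contains_not_neutral by blast
    then obtain q where q: "q \<in> ?B" "f p * g q * cm h p q r \<noteq> 0"
      using sum.not_neutral_contains_not_neutral by blast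
    then have "r = (fst p, snd p @ snd q)"
      by (auto simp: cm_def path_cat_def split: if_splits)
    then show "r \<in> (\<lambda>(p,q). (fst p, snd p @ snd q)) ` (?A \<times> ?B)" using p q by force
  qed
  then show ?thesis unfolding fs_def using fin by (auto intro: finite_subset)
qed


lemma valid_cat:
  assumes p: "valid_path V E s h p" and q: "valid_path V E s h q" and e: "path_end h p = fst q"
  shows "valid_path V E s h (fst p, snd p @ snd q)"
proof -
  obtain v as where pv: "p = (v, as)" by (cases p)
  obtain w bs where qv: "q = (w, bs)" by (cases q)
  have p1: "v \<in> V" "set as \<subseteq> E" "as \<noteq> [] \<Longrightarrow> s (hd as) = v"
    "\<And>i. Suc i < length as \<Longrightarrow> h (as!i) = s (as ! Suc i)"
    using p unfolding pv valid_path_def by auto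
  have q1: "w \<in> V" "set bs \<subseteq> E" "bs \<noteq> [] \<Longrightarrow> s (hd bs) = w"
    "\<And>i. Suc i < length bs \<Longrightarrow> h (bs!i) = s (bs ! Suc i)"
    using q unfolding qv valid_path_def by auto
  have e1: "(if as = [] then v else h (last as)) = w" using e by (cases "as = []") (simp_all add: path_end_def pv qv)
  have adj: "h ((as @ bs) ! i) = s ((as @ bs) ! Suc i)" if i: "Suc i < length (as @ bs)" for i
  proof (cases "Suc i < length as")
    case True then show ?thesis using p1(4)[OF True] by (simp add: nth_append)
  next
    case False
    show ?thesis
    proof (cases "Suc i = length as")
      case True
      then have ne: "as \<noteq> []" by auto
      have bne: "bs \<noteq> []" using i True by auto
      have ii: "i = length as - 1" using True by simp
      have "(as @ bs) ! i = last as" using True ne unfolding ii by (simp add: nth_append last_conv_nth)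
      moreover have "(as @ bs) ! Suc i = hd bs" using True bne by (simp add: nth_append hd_conv_nth)
      ultimately show ?thesis using e1 ne q1(3)[OF bne] by simp
    next
      case F2: False
      then have ge: "length as \<le> i" using False by simp
      then have "Suc (i - length as) < length bs" using i by simp
      from q1(4)[OF this] ge show ?thesis
        by (simp add: nth_append Suc_diff_le)
    qed
  qed
  have hd1: "s (hd (as @ bs)) = v" if "as @ bs \<noteq> []"
  proof (cases "as = []")
    case True then show ?thesis using that e1 q1(3) by simp
  next
    case False then show ?thesis using p1(3) by simp
  qed
  show ?thesis unfolding pv qv valid_path_def using p1 q1 adj hd1 by auto
qed

lemma path_end_cat: "path_end h p = fst q \<Longrightarrow> path_end h (fst p, snd p @ snd q) = path_end h q"
  by (auto simp: path_end_def)

lemma valid_snoc: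
  assumes "valid_path V E s h (v, as @ [e])"
  shows "valid_path V E s h (v, as)" "e \<in> E" "path_end h (v, as) = s e"
proof -
  have a: "v \<in> V" "set as \<subseteq> E" "e \<in> E" "s (hd (as @ [e])) = v"
    "\<And>i. Suc i < length (as @ [e]) \<Longrightarrow> h ((as @ [e])!i) = s ((as @ [e]) ! Suc i)"
    using assms unfolding valid_path_def by auto
  show "e \<in> E" by fact
  show "valid_path V E s h (v, as)"
    unfolding valid_path_def
  proof (intro conjI impI allI)
    show "fst (v, as) \<in> V" "set (snd (v, as)) \<subseteq> E" using a by auto
    show "s (hd (snd (v, as))) = fst (v, as)" if "snd (v, as) \<noteq> []" using a(4) that by simp
    fix i assume "Suc i < length (snd (v, as))"
    then show "h (snd (v, as) ! i) = s (snd (v, as) ! Suc i)" using a(5)[of i] by (simp add: nth_append)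
  qed
  show "path_end h (v, as) = s e"
  proof (cases "as = []")
    case True then show ?thesis using a(4) by (simp add: path_end_def)
  next
    case False
    then have "Suc (length as - 1) < length (as @ [e])" by simp
    from a(5)[OF this] False show ?thesis
      by (simp add: path_end_def nth_append last_conv_nth)
  qed
qed

lemma valid_start: "valid_path V E s h p \<Longrightarrow> fst p \<in> V"
  by (simp add: valid_path_def)

lemma valid_end:
  assumes "valid_path V E s h p" "\<forall>e\<in>E. s e \<in> V \<and> h e \<in> V"
  shows "path_end h p \<in> V"
proof (cases "snd p = []")
  case True then show ?thesis using assms by (simp add: path_end_def valid_path_def)
next
  case False
  then have "last (snd p) \<in> E" using assms(1) last_in_set by (auto simp: valid_path_def)
  then show ?thesis using assms(2) False by (simp add: path_end_def)
qed

lemma pmul_ind_assoc: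
  "pmul h (pmul h (ind a) (ind b)) (ind c) = pmul h (ind a) (pmul h (ind b) (ind c))"
  by (simp add: pmul_ind path_end_cat)

lemma pmul_sum_psc_left:
  assumes "\<And>i. i \<in> A \<Longrightarrow> fs (F i)" "fs g"
  shows "pmul h (\<Sum>i\<in>A. psc (c i) (F i)) g = (\<Sum>i\<in>A. psc (c i) (pmul h (F i) g))"
  using assms by (simp add: pmul_sum_left pmul_psc_left)

lemma pmul_sum_psc_right:
  assumes "\<And>i. i \<in> A \<Longrightarrow> fs (F i)" "fs g"
  shows "pmul h g (\<Sum>i\<in>A. psc (c i) (F i)) = (\<Sum>i\<in>A. psc (c i) (pmul h g (F i)))"
  using assms by (simp add: pmul_sum_right pmul_psc_right)

lemma pmul_dexp:
  assumes x: "fs x" and y: "fs y"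
  shows "pmul h x y = (\<Sum>a\<in>{a. x a \<noteq> 0}. psc (x a) (\<Sum>b\<in>{b. y b \<noteq> 0}. psc (y b) (pmul h (ind a) (ind b))))"
proof -
  let ?A = "{a. x a \<noteq> 0}" and ?B = "{b. y b \<noteq> 0}"
  have fin: "finite ?A" "finite ?B" using x y by (auto simp: fs_def)
  have ex: "x = (\<Sum>a\<in>?A. psc (x a) (ind a))" by (rule fs_expand[OF x fin(1)]) simp
  have ey: "y = (\<Sum>b\<in>?B. psc (y b) (ind b))" by (rule fs_expand[OF y fin(2)]) simp
  have "pmul h x y = pmul h (\<Sum>a\<in>?A. psc (x a) (ind a)) y" using ex by simp
  also have "\<dots> = (\<Sum>a\<in>?A. psc (x a) (pmul h (ind a) y))"
    by (rule pmul_sum_psc_left) (use y in auto)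
  also have "\<dots> = (\<Sum>a\<in>?A. psc (x a) (pmul h (ind a) (\<Sum>b\<in>?B. psc (y b) (ind b))))"
    using ey by simp
  also have "\<dots> = (\<Sum>a\<in>?A. psc (x a) (\<Sum>b\<in>?B. psc (y b) (pmul h (ind a) (ind b))))"
    by (rule sum.cong[OF refl], subst pmul_sum_psc_right) auto
  finally show ?thesis .
qed

lemma pmul_assoc:
  assumes x: "fs x" and y: "fs y" and z: "fs z"
  shows "pmul h (pmul h x y) z = pmul h x (pmul h y z)"
proof -
  let ?A = "{a. x a \<noteq> 0}" and ?B = "{b. y b \<noteq> 0}" and ?C = "{c. z c \<noteq> 0}"
  have fin: "finite ?C" using z by (auto simp: fs_def)
  have ez: "z = (\<Sum>c\<in>?C. psc (z c) (ind c))" by (rule fs_expand[OF z fin]) simp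
  have fM: "fs (pmul h (ind a) (ind b))" for a b by (rule fs_pmul) auto
  have fS: "fs (\<Sum>b\<in>?B. psc (y b) (pmul h (ind a) (ind b)))" for a
    by (rule fs_sum) (auto simp: fM)
  have mz: "pmul h (pmul h (ind a) (ind b)) z = (\<Sum>c\<in>?C. psc (z c) (pmul h (pmul h (ind a) (ind b)) (ind c)))" for a b
    by (subst ez, rule pmul_sum_psc_right) (auto simp: fM)
  have "pmul h (pmul h x y) z = (\<Sum>a\<in>?A. psc (x a) (pmul h (\<Sum>b\<in>?B. psc (y b) (pmul h (ind a) (ind b))) z))"
    unfolding pmul_dexp[OF x y] by (rule pmul_sum_psc_left) (auto simp: fS z)
  also have "\<dots> = (\<Sum>a\<in>?A. psc (x a) (\<Sum>b\<in>?B. psc (y b) (\<Sum>c\<in>?C. psc (z c) (pmul h (pmul h (ind a) (ind b)) (ind c)))))"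
    by (rule sum.cong[OF refl], subst pmul_sum_psc_left) (auto simp: fM z simp: mz)
  finally have L: "pmul h (pmul h x y) z = \<dots>" .
  have fN: "fs (\<Sum>c\<in>?C. psc (z c) (pmul h (ind b) (ind c)))" for b
    by (rule fs_sum) (auto simp: fM)
  have fin1: "finite ?A" using x by (auto simp: fs_def)
  have ex: "x = (\<Sum>a\<in>?A. psc (x a) (ind a))" by (rule fs_expand[OF x fin1]) simp
  have ia: "pmul h (ind a) (pmul h y z) = (\<Sum>b\<in>?B. psc (y b) (\<Sum>c\<in>?C. psc (z c) (pmul h (ind a) (pmul h (ind b) (ind c)))))" for a
  proof -
    have "pmul h (ind a) (pmul h y z) = (\<Sum>b\<in>?B. psc (y b) (pmul h (ind a) (\<Sum>c\<in>?C. psc (z c) (pmul h (ind b) (ind c)))))"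
      unfolding pmul_dexp[OF y z] by (rule pmul_sum_psc_right) (auto simp: fN)
    also have "\<dots> = (\<Sum>b\<in>?B. psc (y b) (\<Sum>c\<in>?C. psc (z c) (pmul h (ind a) (pmul h (ind b) (ind c)))))"
      by (rule sum.cong[OF refl], subst pmul_sum_psc_right) (auto simp: fM)
    finally show ?thesis .
  qed
  have "pmul h x (pmul h y z) = pmul h (\<Sum>a\<in>?A. psc (x a) (ind a)) (pmul h y z)" using ex by simp
  also have "\<dots> = (\<Sum>a\<in>?A. psc (x a) (pmul h (ind a) (pmul h y z)))"
    by (rule pmul_sum_psc_left) (auto intro: fs_pmul y z)
  also have "\<dots> = (\<Sum>a\<in>?A. psc (x a) (\<Sum>b\<in>?B. psc (y b) (\<Sum>c\<in>?C. psc (z c) (pmul h (ind a) (pmul h (ind b) (ind c))))))"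
    by (simp only: ia)
  finally show ?thesis unfolding L by (simp only: pmul_ind_assoc)
qed


definition Dlin :: "('a \<Rightarrow> ('a \<Rightarrow> 'k::field)) \<Rightarrow> ('a \<Rightarrow> 'k) \<Rightarrow> 'a \<Rightarrow> 'k" where
  "Dlin \<delta> x = (\<Sum>p\<in>{p. x p \<noteq> 0}. psc (x p) (\<delta> p))"

lemma psc_zero_left[simp]: "psc 0 f = 0" by (simp add: fun_eq_iff)

lemma Dlin_eq: "finite A \<Longrightarrow> {p. x p \<noteq> 0} \<subseteq> A \<Longrightarrow> Dlin \<delta> x = (\<Sum>p\<in>A. psc (x p) (\<delta> p))"
  unfolding Dlin_def by (rule sum.mono_neutral_left) auto

lemma Dlin_add:
  assumes "fs x" "fs y"
  shows "Dlin \<delta> (x + y) = Dlin \<delta> x + Dlin \<delta> y"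
proof -
  let ?A = "{p. x p \<noteq> 0} \<union> {p. y p \<noteq> 0}"
  have fA: "finite ?A" using assms by (auto simp: fs_def)
  have "Dlin \<delta> (x + y) = (\<Sum>p\<in>?A. psc ((x + y) p) (\<delta> p))" by (rule Dlin_eq[OF fA]) auto
  moreover have "Dlin \<delta> x = (\<Sum>p\<in>?A. psc (x p) (\<delta> p))" by (rule Dlin_eq[OF fA]) auto
  moreover have "Dlin \<delta> y = (\<Sum>p\<in>?A. psc (y p) (\<delta> p))" by (rule Dlin_eq[OF fA]) auto
  ultimately show ?thesis by (simp add: sum.distrib[symmetric] PV.scale_left_distrib)
qed

lemma Dlin_psc:
  assumes "fs x"
  shows "Dlin \<delta> (psc c x) = psc c (Dlin \<delta> x)"
proof -
  let ?A = "{p. x p \<noteq> 0}"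
  have fA: "finite ?A" using assms by (auto simp: fs_def)
  have "Dlin \<delta> (psc c x) = (\<Sum>p\<in>?A. psc (psc c x p) (\<delta> p))" by (rule Dlin_eq[OF fA]) auto
  moreover have "Dlin \<delta> x = (\<Sum>p\<in>?A. psc (x p) (\<delta> p))" by (rule Dlin_eq[OF fA]) auto
  ultimately show ?thesis by (simp add: PV.scale_sum_right)
qed

lemma Dlin_ind[simp]: "Dlin \<delta> (ind a) = \<delta> a"
  by (subst Dlin_eq[of "{a}"]) (auto simp: ind_def)

lemma Dlin_zero[simp]: "Dlin \<delta> 0 = 0"
  by (simp add: Dlin_def)

lemma Dlin_sum:
  assumes "\<And>i. i \<in> A \<Longrightarrow> fs (F i)"
  shows "Dlin \<delta> (\<Sum>i\<in>A. F i) = (\<Sum>i\<in>A. Dlin \<delta> (F i))"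
  using assms
proof (induct A rule: infinite_finite_induct)
  case (insert a A)
  have "Dlin \<delta> (\<Sum>i\<in>insert a A. F i) = Dlin \<delta> (F a + (\<Sum>i\<in>A. F i))"
    by (rule arg_cong[where f="Dlin \<delta>"], rule sum.insert[OF insert(1,2)])
  also have "\<dots> = Dlin \<delta> (F a) + Dlin \<delta> (\<Sum>i\<in>A. F i)"
    by (rule Dlin_add) (use insert in \<open>auto intro: fs_sum\<close>)
  also have "\<dots> = (\<Sum>i\<in>insert a A. Dlin \<delta> (F i))"
    using insert by (simp add: sum.insert[OF insert(1,2)])
  finally show ?case .
qed auto

lemma Dlin_sum_psc:
  assumes "\<And>i. i \<in> A \<Longrightarrow> fs (F i)"
  shows "Dlin \<delta> (\<Sum>i\<in>A. psc (c i) (F i)) = (\<Sum>i\<in>A. psc (c i) (Dlin \<delta> (F i)))"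
  using assms by (simp add: Dlin_sum Dlin_psc)

lemma Dlin_fs: "(\<And>p. fs (\<delta> p)) \<Longrightarrow> fs (Dlin \<delta> x)"
  unfolding Dlin_def by (rule fs_sum) auto

lemma Dlin_pathalg:
  assumes "x \<in> pathalg V E s h" "\<And>p. valid_path V E s h p \<Longrightarrow> \<delta> p \<in> pathalg V E s h"
  shows "Dlin \<delta> x \<in> pathalg V E s h"
  unfolding Dlin_def
  by (rule PV.subspace_sum[OF pathalg_subspace], rule PV.subspace_scale[OF pathalg_subspace])
    (use assms in \<open>auto intro: pathalg_valid\<close>)

lemma Dlin_leibniz:
  assumes fd: "\<And>p. fs (\<delta> p)" and x: "fs x" and y: "fs y"
    and L: "\<And>a b. x a \<noteq> 0 \<Longrightarrow> y b \<noteq> 0 \<Longrightarrow>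
      Dlin \<delta> (pmul h (ind a) (ind b)) = pmul h (\<delta> a) (ind b) + pmul h (ind a) (\<delta> b)"
  shows "Dlin \<delta> (pmul h x y) = pmul h (Dlin \<delta> x) y + pmul h x (Dlin \<delta> y)"
proof -
  let ?A = "{a. x a \<noteq> 0}" and ?B = "{b. y b \<noteq> 0}"
  have finA: "finite ?A" and finB: "finite ?B" using x y by (auto simp: fs_def)
  have fM: "fs (pmul h (ind a) (ind b))" for a b by (rule fs_pmul) auto
  have fS: "fs (\<Sum>b\<in>?B. psc (y b) (pmul h (ind a) (ind b)))" for a
    by (rule fs_sum) (simp add: fM)
  have "Dlin \<delta> (pmul h x y) = (\<Sum>a\<in>?A. psc (x a) (Dlin \<delta> (\<Sum>b\<in>?B. psc (y b) (pmul h (ind a) (ind b)))))"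
    unfolding pmul_dexp[OF x y] by (rule Dlin_sum_psc) (simp add: fS)
  also have "\<dots> = (\<Sum>a\<in>?A. psc (x a) (\<Sum>b\<in>?B. psc (y b) (Dlin \<delta> (pmul h (ind a) (ind b)))))"
    by (rule sum.cong[OF refl], subst Dlin_sum_psc) (auto simp: fM)
  also have "\<dots> = (\<Sum>a\<in>?A. psc (x a) (\<Sum>b\<in>?B. psc (y b) (pmul h (\<delta> a) (ind b) + pmul h (ind a) (\<delta> b))))"
    by (intro sum.cong refl arg_cong[where f="psc _"]) (simp add: L)
  also have "\<dots> = pmul h (Dlin \<delta> x) y + pmul h x (Dlin \<delta> y)"
  proof -
    have ex: "x = (\<Sum>a\<in>?A. psc (x a) (ind a))" by (rule fs_expand[OF x finA]) simp
    have ey: "y = (\<Sum>b\<in>?B. psc (y b) (ind b))" by (rule fs_expand[OF y finB]) simp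
    have dx: "Dlin \<delta> x = (\<Sum>a\<in>?A. psc (x a) (\<delta> a))" by (simp add: Dlin_def)
    have dy: "Dlin \<delta> y = (\<Sum>b\<in>?B. psc (y b) (\<delta> b))" by (simp add: Dlin_def)
    have e1: "pmul h (Dlin \<delta> x) y = (\<Sum>a\<in>?A. psc (x a) (\<Sum>b\<in>?B. psc (y b) (pmul h (\<delta> a) (ind b))))"
    proof -
      have "pmul h (Dlin \<delta> x) y = (\<Sum>a\<in>?A. psc (x a) (pmul h (\<delta> a) y))"
        unfolding dx by (rule pmul_sum_psc_left) (auto simp: fd y)
      also have "\<dots> = (\<Sum>a\<in>?A. psc (x a) (\<Sum>b\<in>?B. psc (y b) (pmul h (\<delta> a) (ind b))))"
        by (rule sum.cong[OF refl], subst ey, subst pmul_sum_psc_right) (auto simp: fd)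
      finally show ?thesis .
    qed
    have e2: "pmul h x (Dlin \<delta> y) = (\<Sum>a\<in>?A. psc (x a) (\<Sum>b\<in>?B. psc (y b) (pmul h (ind a) (\<delta> b))))"
    proof -
      have "pmul h x (Dlin \<delta> y) = (\<Sum>a\<in>?A. psc (x a) (pmul h (ind a) (Dlin \<delta> y)))"
        by (subst ex, rule pmul_sum_psc_left) (auto simp: Dlin_fs fd)
      also have "\<dots> = (\<Sum>a\<in>?A. psc (x a) (\<Sum>b\<in>?B. psc (y b) (pmul h (ind a) (\<delta> b))))"
        by (rule sum.cong[OF refl], subst dy, subst pmul_sum_psc_right) (auto simp: fd)
      finally show ?thesis .
    qed
    show ?thesis unfolding e1 e2
      by (simp add: fun_eq_iff sum_fun_apply sum.distrib distrib_left)
  qed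
  finally show ?thesis .
qed

definition pos :: "'e \<Rightarrow> ('v,'e) path \<Rightarrow> nat set" where
  "pos r p = {i. i < length (snd p) \<and> snd p ! i = r}"

definition splice :: "'e \<Rightarrow> ('v,'e) path \<Rightarrow> ('v,'e) path \<Rightarrow> nat \<Rightarrow> ('v,'e) path" where
  "splice r q p i = (fst p, take i (snd p) @ snd q @ drop (Suc i) (snd p))"

definition dl :: "'e \<Rightarrow> ('v,'e) path \<Rightarrow> ('v,'e) path \<Rightarrow> ('v,'e) path \<Rightarrow> 'k::field" where
  "dl r q p = (\<Sum>i\<in>pos r p. ind (splice r q p i))"

lemma finite_pos[simp]: "finite (pos r p)"
  unfolding pos_def by (rule finite_subset[of _ "{..<length (snd p)}"]) auto

lemma fs_dl[simp]: "fs (dl r q p)"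
  unfolding dl_def by (rule fs_sum) simp

lemma valid_split:
  assumes v: "valid_path V E s h (v, as @ bs)" and ends: "\<forall>e\<in>E. s e \<in> V \<and> h e \<in> V"
  shows "valid_path V E s h (v, as)" "valid_path V E s h (path_end h (v, as), bs)"
proof -
  have a: "v \<in> V" "set as \<subseteq> E" "set bs \<subseteq> E" "as @ bs \<noteq> [] \<Longrightarrow> s (hd (as @ bs)) = v"
    "\<And>i. Suc i < length (as @ bs) \<Longrightarrow> h ((as @ bs)!i) = s ((as @ bs) ! Suc i)"
    using v unfolding valid_path_def by auto
  show "valid_path V E s h (v, as)"
    unfolding valid_path_def
  proof (intro conjI impI allI)
    show "fst (v, as) \<in> V" "set (snd (v, as)) \<subseteq> E" using a by auto
    show "s (hd (snd (v, as))) = fst (v, as)" if "snd (v, as) \<noteq> []" using a(4) that by simp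
    fix i assume "Suc i < length (snd (v, as))"
    then show "h (snd (v, as) ! i) = s (snd (v, as) ! Suc i)" using a(5)[of i] by (simp add: nth_append)
  qed
  show "valid_path V E s h (path_end h (v, as), bs)"
    unfolding valid_path_def
  proof (intro conjI impI allI)
    show "fst (path_end h (v, as), bs) \<in> V"
    proof (cases "as = []")
      case True then show ?thesis using a by (simp add: path_end_def)
    next
      case False
      then have "last as \<in> E" using a(2) last_in_set by blast
      then show ?thesis using ends False by (simp add: path_end_def)
    qed
    show "set (snd (path_end h (v, as), bs)) \<subseteq> E" using a by simp
    show "s (hd (snd (path_end h (v, as), bs))) = fst (path_end h (v, as), bs)"
      if bne: "snd (path_end h (v, as), bs) \<noteq> []"
    proof (cases "as = []")
      case True then show ?thesis using a(4) bne by (simp add: path_end_def)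
    next
      case False
      then have "Suc (length as - 1) < length (as @ bs)" using bne by simp
      from a(5)[OF this] False bne show ?thesis
        by (simp add: path_end_def nth_append last_conv_nth hd_conv_nth)
    qed
    fix i assume "Suc i < length (snd (path_end h (v, as), bs))"
    then have "Suc (length as + i) < length (as @ bs)" by simp
    from a(5)[OF this] show "h (snd (path_end h (v, as), bs) ! i) = s (snd (path_end h (v, as), bs) ! Suc i)"
      by (simp add: nth_append)
  qed
qed


lemma splice_struct:
  assumes ends: "\<forall>e\<in>E. s e \<in> V \<and> h e \<in> V"
    and p: "valid_path V E s h (v, as)" and i: "i < length as" "as ! i = r"
  shows "valid_path V E s h (v, take i as)" "path_end h (v, take i as) = s r"
    "valid_path V E s h (h r, drop (Suc i) as)"
proof -
  have v1: "valid_path V E s h (v, take i as @ r # drop (Suc i) as)"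
    using p by (simp only: i(2)[symmetric] id_take_nth_drop[OF i(1), symmetric])
  show "valid_path V E s h (v, take i as)" using valid_split(1)[OF v1 ends] .
  have v2: "valid_path V E s h (path_end h (v, take i as), r # drop (Suc i) as)"
    using valid_split(2)[OF v1 ends] .
  then show e: "path_end h (v, take i as) = s r" by (simp add: valid_path_def)
  have v3: "valid_path V E s h (path_end h (v, take i as), [r] @ drop (Suc i) as)" using v2 by simp
  have "valid_path V E s h (path_end h (path_end h (v, take i as), [r]), drop (Suc i) as)"
    using valid_split(2)[OF v3 ends] .
  then show "valid_path V E s h (h r, drop (Suc i) as)" by (simp add: path_end_def)
qed

lemma splice_props:
  assumes ends: "\<forall>e\<in>E. s e \<in> V \<and> h e \<in> V"
    and vq: "valid_path V E s h q" and sr: "s r = fst q" and hr: "h r = path_end h q"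
    and p: "valid_path V E s h p" and i: "i \<in> pos r p"
  shows "valid_path V E s h (splice r q p i)" "path_end h (splice r q p i) = path_end h p"
    "fst (splice r q p i) = fst p"
proof -
  obtain v as where pv: "p = (v, as)" by (cases p)
  have i': "i < length as" "as ! i = r" using i unfolding pos_def pv by auto
  note st = splice_struct[OF ends p[unfolded pv] i']
  let ?rest = "drop (Suc i) as"
  have vs: "valid_path V E s h (fst q, snd q @ snd (h r, ?rest))"
    by (rule valid_cat[OF vq st(3)]) (simp add: hr)
  have "valid_path V E s h (fst (v, take i as), snd (v, take i as) @ snd (fst q, snd q @ ?rest))"
    by (rule valid_cat[OF st(1)]) (use vs in \<open>simp_all add: st(2) sr\<close>)
  then show "valid_path V E s h (splice r q p i)" by (simp add: splice_def pv)
  have e1: "path_end h (fst (v, take i as), snd (v, take i as) @ snd (fst q, snd q @ ?rest))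
      = path_end h (fst q, snd q @ ?rest)"
    by (rule path_end_cat) (simp add: st(2) sr)
  have e2: "path_end h (fst q, snd q @ snd (h r, ?rest)) = path_end h (h r, ?rest)"
    by (rule path_end_cat) (simp add: hr)
  have e3: "path_end h (fst (v, take i as), snd (v, take i as) @ snd (s r, [r] @ ?rest))
      = path_end h (s r, [r] @ ?rest)"
    by (rule path_end_cat) (simp add: st(2))
  have e4: "path_end h (fst (s r, [r]), snd (s r, [r]) @ snd (h r, ?rest)) = path_end h (h r, ?rest)"
    by (rule path_end_cat) (simp add: path_end_def)
  have asd: "as = take i as @ [r] @ ?rest"
    using id_take_nth_drop[OF i'(1)] i'(2) by simp
  have "path_end h p = path_end h (v, take i as @ [r] @ ?rest)" using asd pv by simp
  also have "\<dots> = path_end h (h r, ?rest)" using e3 e4 by simp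
  finally have ep: "path_end h p = path_end h (h r, ?rest)" .
  show "path_end h (splice r q p i) = path_end h p"
    using e1 e2 ep by (simp add: splice_def pv)
  show "fst (splice r q p i) = fst p" by (simp add: splice_def)
qed

lemma dl_pathalg:
  assumes ends: "\<forall>e\<in>E. s e \<in> V \<and> h e \<in> V"
    and vq: "valid_path V E s h q" and sr: "s r = fst q" and hr: "h r = path_end h q"
    and p: "valid_path V E s h p"
  shows "dl r q p \<in> pathalg V E s h"
  unfolding dl_def
  by (rule PV.subspace_sum[OF pathalg_subspace], rule ind_pathalg,
      rule splice_props(1)[OF ends vq sr hr p])

lemma pos_append:
  "pos r (v, as @ bs) = pos r (v, as) \<union> (\<lambda>j. length as + j) ` pos r (w, bs)"
proof (rule set_eqI, rule iffI)
  fix i assume "i \<in> pos r (v, as @ bs)"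
  then have i: "i < length as + length bs" "(as @ bs) ! i = r" by (auto simp: pos_def)
  show "i \<in> pos r (v, as) \<union> (\<lambda>j. length as + j) ` pos r (w, bs)"
  proof (cases "i < length as")
    case True then show ?thesis using i by (auto simp: pos_def nth_append)
  next
    case False
    then have "i - length as \<in> pos r (w, bs)" "i = length as + (i - length as)"
      using i by (auto simp: pos_def nth_append)
    then show ?thesis by blast
  qed
next
  fix i assume "i \<in> pos r (v, as) \<union> (\<lambda>j. length as + j) ` pos r (w, bs)"
  then show "i \<in> pos r (v, as @ bs)" by (auto simp: pos_def nth_append)
qed

lemma dl_leibniz:
  assumes ends: "\<forall>e\<in>E. s e \<in> V \<and> h e \<in> V"
    and vq: "valid_path V E s h q" and sr: "s r = fst q" and hr: "h r = path_end h q"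
    and va: "valid_path V E s h a" and vb: "valid_path V E s h b"
  shows "Dlin (dl r q) (pmul h (ind a) (ind b)) = pmul h (dl r q a) (ind b) + pmul h (ind a) (dl r q b)"
proof -
  note sp = splice_props[OF ends vq sr hr]
  have L: "pmul h (dl r q a) (ind b) = (\<Sum>i\<in>pos r a. pmul h (ind (splice r q a i)) (ind b))"
    unfolding dl_def by (rule pmul_sum_left) auto
  have R: "pmul h (ind a) (dl r q b) = (\<Sum>j\<in>pos r b. pmul h (ind a) (ind (splice r q b j)))"
    unfolding dl_def by (rule pmul_sum_right) auto
  show ?thesis
  proof (cases "path_end h a = fst b")
    case False
    have z1: "pmul h (dl r q a) (ind b) = 0" unfolding L
      by (rule sum.neutral) (use False sp(2)[OF va] in \<open>auto simp: pmul_ind\<close>)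
    have z2: "pmul h (ind a) (dl r q b) = 0" unfolding R
      by (rule sum.neutral) (use False sp(3)[OF vb] in \<open>auto simp: pmul_ind\<close>)
    show ?thesis unfolding z1 z2 using False by (simp add: pmul_ind)
  next
    case True
    obtain v as where av: "a = (v, as)" by (cases a)
    obtain w bs where bv: "b = (w, bs)" by (cases b)
    have ew: "path_end h (v, as) = w" using True av bv by simp
    have lhs: "Dlin (dl r q) (pmul h (ind a) (ind b)) = dl r q (v, as @ bs)"
      using True av bv by (simp add: pmul_ind)
    have disj: "pos r (v, as) \<inter> (\<lambda>j. length as + j) ` pos r (w, bs) = {}"
      by (auto simp: pos_def)
    have inj: "inj_on (\<lambda>j. length as + j) (pos r (w, bs))" by (auto simp: inj_on_def)
    have S: "dl r q (v, as @ bs) = (\<Sum>i\<in>pos r (v, as). ind (splice r q (v, as @ bs) i))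
        + (\<Sum>i\<in>(\<lambda>j. length as + j) ` pos r (w, bs). ind (splice r q (v, as @ bs) i))"
      unfolding dl_def pos_append[of r v as bs w] by (rule sum.union_disjoint) (auto simp: disj)
    have S2: "(\<Sum>i\<in>(\<lambda>j. length as + j) ` pos r (w, bs). ind (splice r q (v, as @ bs) i))
        = (\<Sum>j\<in>pos r (w, bs). ind (splice r q (v, as @ bs) (length as + j)))"
      by (rule sum.reindex[OF inj, unfolded comp_def])
    have S1: "(\<Sum>i\<in>pos r (v, as). ind (splice r q (v, as @ bs) i))
        = (\<Sum>i\<in>pos r a. pmul h (ind (splice r q a i)) (ind b))"
    proof (rule sum.cong)
      fix i assume i0: "i \<in> pos r a"
      then have i: "i \<in> pos r (v, as)" using av by simp
      then have il: "i < length as" by (auto simp: pos_def)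
      have "path_end h (splice r q a i) = fst b" using sp(2)[OF va] i av bv ew by simp
      then show "ind (splice r q (v, as @ bs) i) = pmul h (ind (splice r q a i)) (ind b)"
        using il by (simp add: pmul_ind splice_def av bv)
    qed (simp add: av)
    have S3: "(\<Sum>j\<in>pos r (w, bs). ind (splice r q (v, as @ bs) (length as + j)))
        = (\<Sum>j\<in>pos r b. pmul h (ind a) (ind (splice r q b j)))"
    proof (rule sum.cong)
      fix j assume j: "j \<in> pos r b"
      have "path_end h a = fst (splice r q b j)" using ew av bv by (simp add: splice_def)
      then show "ind (splice r q (v, as @ bs) (length as + j)) = pmul h (ind a) (ind (splice r q b j))"
        by (simp add: pmul_ind splice_def av bv)
    qed (simp add: bv)
    show ?thesis unfolding lhs L R S S1 S2 S3 ..
  qed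
qed

lemma dl_vertex: "dl r q (v, []) = 0"
  by (simp add: dl_def pos_def)

lemma dl_arrow: "s r = fst q \<Longrightarrow> dl r q (s e, [e]) = (if e = r then ind q else 0)"
proof -
  assume sr: "s r = fst q"
  have "pos r (s e, [e]) = (if e = r then {0} else {})" by (auto simp: pos_def)
  then show ?thesis using sr by (auto simp: dl_def splice_def)
qed


context vector_space begin

definition idx :: "'c list \<Rightarrow> 'c \<Rightarrow> nat" where
  "idx xs x = (THE i. i < length xs \<and> xs ! i = x)"

lemma idx_nth: "distinct xs \<Longrightarrow> i < length xs \<Longrightarrow> idx xs (xs ! i) = i"
  unfolding idx_def by (rule the_equality) (auto simp: nth_eq_iff_index_eq)

lemma idx_in: "distinct xs \<Longrightarrow> x \<in> set xs \<Longrightarrow> idx xs x < length xs \<and> xs ! idx xs x = x"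
  by (metis in_set_conv_nth idx_nth)

lemma lcomb_map_set:
  assumes "distinct xs"
  shows "lcomb c (map F xs) = (\<Sum>x\<in>set xs. c (idx xs x) *s F x)"
proof -
  have "lcomb c (map F xs) = (\<Sum>i<length xs. c (idx xs (xs ! i)) *s F (xs ! i))"
    unfolding lcomb_def using assms by (auto intro!: sum.cong simp: idx_nth)
  also have "\<dots> = (\<Sum>x\<in>set xs. c (idx xs x) *s F x)"
    by (rule sum.reindex_bij_betw[where g="\<lambda>x. c (idx xs x) *s F x"], rule bij_betw_nth[OF assms]) auto
  finally show ?thesis .
qed

end

lemma fun_sum_apply: "(\<Sum>i\<in>A. F i) x = (\<Sum>i\<in>A. F i x)"
  by (rule sum_fun_apply)

locale QA =
  fixes V :: "'v set" and E :: "'e set" and s h :: "'e \<Rightarrow> 'v"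
    and I :: "(('v,'e) path \<Rightarrow> 'k::field) set" and Q :: "('v,'e) path set"
  assumes ends: "\<forall>e\<in>E. s e \<in> V \<and> h e \<in> V"
    and ideal: "two_sided_ideal V E s h I"
    and basis: "path_class_basis V E s h I Q"
begin

abbreviation P :: "(('v,'e) path \<Rightarrow> 'k) set" where "P \<equiv> pathalg V E s h"
abbreviation valid :: "('v,'e) path \<Rightarrow> bool" where "valid \<equiv> valid_path V E s h"
abbreviation mul :: "(('v,'e) path \<Rightarrow> 'k) \<Rightarrow> (('v,'e) path \<Rightarrow> 'k) \<Rightarrow> (('v,'e) path \<Rightarrow> 'k)"
  where "mul \<equiv> pmul h"

lemma P_sub: "PV.subspace P" by (rule pathalg_subspace)
lemma P_fs: "x \<in> P \<Longrightarrow> fs x" by (rule pathalg_fs)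

lemma I_sub: "I \<subseteq> P" using ideal by (simp add: two_sided_ideal_def)

lemma I_subspace: "PV.subspace I"
  using ideal unfolding two_sided_ideal_def PV.subspace_def padd_eq pzero_eq by auto

lemma I_0[simp]: "0 \<in> I" using I_subspace by (rule PV.subspace_0)
lemma I_add: "x \<in> I \<Longrightarrow> y \<in> I \<Longrightarrow> x + y \<in> I" using I_subspace by (rule PV.subspace_add)
lemma I_diff: "x \<in> I \<Longrightarrow> y \<in> I \<Longrightarrow> x - y \<in> I" using I_subspace by (rule PV.subspace_diff)
lemma I_psc: "x \<in> I \<Longrightarrow> psc c x \<in> I" using I_subspace by (rule PV.subspace_scale)
lemma I_neg: "x \<in> I \<Longrightarrow> - x \<in> I" using I_subspace by (rule PV.subspace_neg)
lemma I_sum: "(\<And>i. i \<in> A \<Longrightarrow> F i \<in> I) \<Longrightarrow> (\<Sum>i\<in>A. F i) \<in> I"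
  using I_subspace by (rule PV.subspace_sum)
lemma I_mul_left: "x \<in> I \<Longrightarrow> a \<in> P \<Longrightarrow> mul a x \<in> I"
  using ideal by (simp add: two_sided_ideal_def)
lemma I_mul_right: "x \<in> I \<Longrightarrow> a \<in> P \<Longrightarrow> mul x a \<in> I"
  using ideal by (simp add: two_sided_ideal_def)

lemma P_add: "x \<in> P \<Longrightarrow> y \<in> P \<Longrightarrow> x + y \<in> P" using P_sub by (rule PV.subspace_add)
lemma P_diff: "x \<in> P \<Longrightarrow> y \<in> P \<Longrightarrow> x - y \<in> P" using P_sub by (rule PV.subspace_diff)
lemma P_psc: "x \<in> P \<Longrightarrow> psc c x \<in> P" using P_sub by (rule PV.subspace_scale)
lemma P_0[simp]: "0 \<in> P" using P_sub by (rule PV.subspace_0)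
lemma P_sum: "(\<And>i. i \<in> A \<Longrightarrow> F i \<in> P) \<Longrightarrow> (\<Sum>i\<in>A. F i) \<in> P"
  using P_sub by (rule PV.subspace_sum)

lemma P_mul: "x \<in> P \<Longrightarrow> y \<in> P \<Longrightarrow> mul x y \<in> P"
proof -
  assume x: "x \<in> P" and y: "y \<in> P"
  have "fs (mul x y)" using x y by (auto intro: fs_pmul P_fs)
  moreover have "valid r" if r: "mul x y r \<noteq> 0" for r
  proof -
    let ?A = "{p. x p \<noteq> 0}" and ?B = "{q. y q \<noteq> 0}"
    have fin: "finite ?A" "finite ?B" using x y P_fs by (auto simp: fs_def)
    have "(\<Sum>p\<in>?A. \<Sum>q\<in>?B. x p * y q * cm h p q r) \<noteq> 0"
      using pmul_eq[OF fin, of x y h r] r by simp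
    then obtain p where p: "p \<in> ?A" "(\<Sum>q\<in>?B. x p * y q * cm h p q r) \<noteq> 0"
      using sum.not_neutral_contains_not_neutral by blast
    then obtain q where q: "q \<in> ?B" "x p * y q * cm h p q r \<noteq> 0"
      using sum.not_neutral_contains_not_neutral by blast
    then have "path_end h p = fst q" "r = (fst p, snd p @ snd q)"
      by (auto simp: cm_def path_cat_def split: if_splits)
    moreover have "valid p" using pathalg_valid[OF x, of p] p(1) by simp
    moreover have "valid q" using pathalg_valid[OF y, of q] q(1) by simp
    ultimately show ?thesis using valid_cat by metis
  qed
  ultimately show ?thesis by (auto simp: pathalg_def fs_def)
qed

definition lc :: "(('v,'e) path \<Rightarrow> 'k) \<Rightarrow> ('v,'e) path set \<Rightarrow> (('v,'e) path \<Rightarrow> 'k)" where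
  "lc c A = (\<Sum>q\<in>A. psc (c q) (ind q))"

lemma Q_fin: "finite Q" using basis by (simp add: path_class_basis_def)
lemma Q_valid: "q \<in> Q \<Longrightarrow> valid q" using basis by (simp add: path_class_basis_def)

lemma lc_fun: "(\<lambda>r. \<Sum>q\<in>A. c q * ind q r) = lc c A"
  by (simp add: lc_def fun_eq_iff sum_fun_apply)

lemma Q_span: "x \<in> P \<Longrightarrow> \<exists>c. x - lc c Q \<in> I"
  using basis unfolding path_class_basis_def lc_fun psub_eq by blast

lemma Q_indep: "lc c Q \<in> I \<Longrightarrow> q \<in> Q \<Longrightarrow> c q = 0"
  using basis unfolding path_class_basis_def lc_fun by blast

lemma lc_ext: "A \<subseteq> Q \<Longrightarrow> lc c A = lc (\<lambda>q. if q \<in> A then c q else 0) Q"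
  unfolding lc_def using Q_fin by (intro sum.mono_neutral_cong_left) auto

lemma coeff_zero: "A \<subseteq> Q \<Longrightarrow> lc c A \<in> I \<Longrightarrow> q \<in> A \<Longrightarrow> c q = 0"
  using Q_indep[of "\<lambda>q. if q \<in> A then c q else 0" q] lc_ext[of A c] by auto

lemma lc_P: "A \<subseteq> Q \<Longrightarrow> lc c A \<in> P"
  unfolding lc_def by (auto intro!: P_sum P_psc ind_pathalg Q_valid)

lemma lc_fs: "fs (lc c A)"
  unfolding lc_def by (rule fs_sum) simp

lemma lc_diff: "lc c A - lc d A = lc (\<lambda>q. c q - d q) A"
  by (simp add: lc_def fun_eq_iff sum_fun_apply sum_subtractf[symmetric] algebra_simps)

lemma lc_add: "lc c A + lc d A = lc (\<lambda>q. c q + d q) A"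
  by (simp add: lc_def fun_eq_iff sum_fun_apply sum.distrib[symmetric] algebra_simps)

lemma lc_cong: "(\<And>q. q \<in> A \<Longrightarrow> c q = d q) \<Longrightarrow> lc c A = lc d A"
  unfolding lc_def by (rule sum.cong) auto

lemma lc_span: "lc c A \<in> PV.span (ind ` A)"
  unfolding lc_def by (rule PV.span_sum, rule PV.span_scale, rule PV.span_base) auto

lemma pmul_vertex_right: "mul (ind q) (ind (v, [])) = (if path_end h q = v then ind q else 0)"
  by (simp add: pmul_ind)

lemma pmul_vertex_left: "mul (ind (v, [])) (ind q) = (if fst q = v then ind q else 0)"
  by (auto simp: pmul_ind path_end_def)

lemma lc_vertex_right: "mul (lc c A) (ind (v, [])) = lc (\<lambda>q. if path_end h q = v then c q else 0) A"
proof -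
  have "mul (lc c A) (ind (v, [])) = (\<Sum>q\<in>A. psc (c q) (mul (ind q) (ind (v, []))))"
    unfolding lc_def by (rule pmul_sum_psc_left) auto
  moreover have "psc (c q) (mul (ind q) (ind (v, []))) = psc (if path_end h q = v then c q else 0) (ind q)" for q
    unfolding pmul_vertex_right by (auto simp: fun_eq_iff)
  ultimately show ?thesis unfolding lc_def by simp
qed

lemma lc_vertex_left: "mul (ind (v, [])) (lc c A) = lc (\<lambda>q. if fst q = v then c q else 0) A"
proof -
  have "mul (ind (v, [])) (lc c A) = (\<Sum>q\<in>A. psc (c q) (mul (ind (v, [])) (ind q)))"
    unfolding lc_def by (rule pmul_sum_psc_right) auto
  moreover have "psc (c q) (mul (ind (v, [])) (ind q)) = psc (if fst q = v then c q else 0) (ind q)" for q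
    unfolding pmul_vertex_left by (auto simp: fun_eq_iff)
  ultimately show ?thesis unfolding lc_def by simp
qed

end


context QA begin

abbreviation DerS :: "((('v,'e) path \<Rightarrow> 'k) \<Rightarrow> (('v,'e) path \<Rightarrow> 'k)) set" where "DerS \<equiv> Der V E s h I"
abbreviation InnS :: "((('v,'e) path \<Rightarrow> 'k) \<Rightarrow> (('v,'e) path \<Rightarrow> 'k)) set" where "InnS \<equiv> Inn V E s h I"
abbreviation Zc :: "(('v,'e) path \<Rightarrow> 'k) set" where "Zc \<equiv> center_rep V E s h I"

definition ZI :: "((('v,'e) path \<Rightarrow> 'k) \<Rightarrow> (('v,'e) path \<Rightarrow> 'k)) set" where
  "ZI = {D. \<forall>x\<in>P. D x \<in> I}"

definition I0 :: "((('v,'e) path \<Rightarrow> 'k) \<Rightarrow> (('v,'e) path \<Rightarrow> 'k)) set" where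
  "I0 = DerS \<inter> ZI"

definition adm :: "(('v,'e) path \<Rightarrow> 'k) \<Rightarrow> (('v,'e) path \<Rightarrow> 'k) \<Rightarrow> (('v,'e) path \<Rightarrow> 'k)" where
  "adm m = (\<lambda>x. if x \<in> P then mul m x - mul x m else 0)"

lemma der_iff: "D \<in> DerS \<longleftrightarrow> (\<forall>x\<in>P. D x \<in> P)
   \<and> (\<forall>x\<in>P. \<forall>y\<in>P. D (x + y) - (D x + D y) \<in> I)
   \<and> (\<forall>c. \<forall>x\<in>P. D (psc c x) - psc c (D x) \<in> I)
   \<and> (\<forall>x\<in>P. \<forall>y\<in>P. D (mul x y) - (mul (D x) y + mul x (D y)) \<in> I)"
  by (simp add: Der_def diff_op_def psub_eq padd_eq)

lemma derD:
  assumes "D \<in> DerS"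
  shows "\<And>x. x \<in> P \<Longrightarrow> D x \<in> P"
    "\<And>x y. x \<in> P \<Longrightarrow> y \<in> P \<Longrightarrow> D (x + y) - (D x + D y) \<in> I"
    "\<And>c x. x \<in> P \<Longrightarrow> D (psc c x) - psc c (D x) \<in> I"
    "\<And>x y. x \<in> P \<Longrightarrow> y \<in> P \<Longrightarrow> D (mul x y) - (mul (D x) y + mul x (D y)) \<in> I"
  using assms unfolding der_iff by blast+

lemma derI:
  assumes "\<And>x. x \<in> P \<Longrightarrow> D x \<in> P"
    "\<And>x y. x \<in> P \<Longrightarrow> y \<in> P \<Longrightarrow> D (x + y) - (D x + D y) \<in> I"
    "\<And>c x. x \<in> P \<Longrightarrow> D (psc c x) - psc c (D x) \<in> I"
    "\<And>x y. x \<in> P \<Longrightarrow> y \<in> P \<Longrightarrow> D (mul x y) - (mul (D x) y + mul x (D y)) \<in> I"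
  shows "D \<in> DerS"
  unfolding der_iff using assms by blast

lemma Der_subspace: "DV.subspace DerS"
  unfolding DV.subspace_def
proof (intro conjI ballI allI)
  show "0 \<in> DerS" by (rule derI) auto
next
  fix D1 D2 assume D1: "D1 \<in> DerS" and D2: "D2 \<in> DerS"
  note d1 = derD[OF D1] and d2 = derD[OF D2]
  show "D1 + D2 \<in> DerS"
  proof (rule derI)
    fix x assume "x \<in> P" then show "(D1 + D2) x \<in> P" using d1 d2 by (auto intro: P_add)
  next
    fix x y assume x: "x \<in> P" and y: "y \<in> P"
    have eq: "(D1 + D2) (x + y) - ((D1 + D2) x + (D1 + D2) y)
      = (D1 (x + y) - (D1 x + D1 y)) + (D2 (x + y) - (D2 x + D2 y))"
      by (simp add: algebra_simps)
    show "(D1 + D2) (x + y) - ((D1 + D2) x + (D1 + D2) y) \<in> I"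
      unfolding eq by (rule I_add[OF d1(2)[OF x y] d2(2)[OF x y]])
  next
    fix c x assume x: "x \<in> P"
    have eq: "(D1 + D2) (psc c x) - psc c ((D1 + D2) x)
      = (D1 (psc c x) - psc c (D1 x)) + (D2 (psc c x) - psc c (D2 x))"
      by (simp add: algebra_simps fun_eq_iff)
    show "(D1 + D2) (psc c x) - psc c ((D1 + D2) x) \<in> I"
      unfolding eq by (rule I_add[OF d1(3)[OF x] d2(3)[OF x]])
  next
    fix x y assume x: "x \<in> P" and y: "y \<in> P"
    have fx: "fs (D1 x)" "fs (D2 x)" "fs (D1 y)" "fs (D2 y)" "fs x" "fs y"
      using d1(1) d2(1) x y by (auto intro: P_fs)
    have eq: "(D1 + D2) (mul x y) - (mul ((D1 + D2) x) y + mul x ((D1 + D2) y))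
      = (D1 (mul x y) - (mul (D1 x) y + mul x (D1 y))) + (D2 (mul x y) - (mul (D2 x) y + mul x (D2 y)))"
      using fx by (simp add: pmul_add_left pmul_add_right algebra_simps)
    show "(D1 + D2) (mul x y) - (mul ((D1 + D2) x) y + mul x ((D1 + D2) y)) \<in> I"
      unfolding eq by (rule I_add[OF d1(4)[OF x y] d2(4)[OF x y]])
  qed
next
  fix c D assume D: "D \<in> DerS"
  note d = derD[OF D]
  show "Dsc c D \<in> DerS"
  proof (rule derI)
    fix x assume "x \<in> P" then show "Dsc c D x \<in> P" using d by (auto intro: P_psc)
  next
    fix x y assume x: "x \<in> P" and y: "y \<in> P"
    have eq: "Dsc c D (x + y) - (Dsc c D x + Dsc c D y) = psc c (D (x + y) - (D x + D y))"
      by (simp add: fun_eq_iff algebra_simps)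
    show "Dsc c D (x + y) - (Dsc c D x + Dsc c D y) \<in> I" unfolding eq by (rule I_psc[OF d(2)[OF x y]])
  next
    fix a x assume x: "x \<in> P"
    have eq: "Dsc c D (psc a x) - psc a (Dsc c D x) = psc c (D (psc a x) - psc a (D x))"
      by (simp add: fun_eq_iff algebra_simps)
    show "Dsc c D (psc a x) - psc a (Dsc c D x) \<in> I" unfolding eq by (rule I_psc[OF d(3)[OF x]])
  next
    fix x y assume x: "x \<in> P" and y: "y \<in> P"
    have fx: "fs (D x)" "fs (D y)" "fs x" "fs y" using d(1) x y by (auto intro: P_fs)
    have eq: "Dsc c D (mul x y) - (mul (Dsc c D x) y + mul x (Dsc c D y))
      = psc c (D (mul x y) - (mul (D x) y + mul x (D y)))"
      using fx by (simp add: pmul_psc_left pmul_psc_right fun_eq_iff algebra_simps)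
    show "Dsc c D (mul x y) - (mul (Dsc c D x) y + mul x (Dsc c D y)) \<in> I"
      unfolding eq by (rule I_psc[OF d(4)[OF x y]])
  qed
qed

lemma ZI_subspace: "DV.subspace ZI"
  unfolding DV.subspace_def ZI_def by (auto intro: I_add I_psc)

lemma I0_subspace: "DV.subspace I0"
  using Der_subspace ZI_subspace unfolding I0_def DV.subspace_def by auto

lemma adm_apply: "x \<in> P \<Longrightarrow> adm m x = mul m x - mul x m"
  by (simp add: adm_def)

lemma adm_der: assumes m: "m \<in> P" shows "adm m \<in> DerS"
proof (rule derI)
  have fm: "fs m" using m by (rule P_fs)
  fix x assume x: "x \<in> P"
  show "adm m x \<in> P" using x m by (simp add: adm_apply P_diff P_mul)
next
  have fm: "fs m" using m by (rule P_fs)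
  fix x y assume x: "x \<in> P" and y: "y \<in> P"
  have fx: "fs x" "fs y" using x y by (auto intro: P_fs)
  have "adm m (x + y) = adm m x + adm m y"
    using x y fx fm by (simp add: adm_apply P_add pmul_add_left pmul_add_right algebra_simps)
  then show "adm m (x + y) - (adm m x + adm m y) \<in> I" by simp
next
  have fm: "fs m" using m by (rule P_fs)
  fix c x assume x: "x \<in> P"
  have fx: "fs x" using x by (rule P_fs)
  have "adm m (psc c x) = psc c (adm m x)"
    using x fx fm by (simp add: adm_apply P_psc pmul_psc_left pmul_psc_right PV.scale_right_diff_distrib)
  then show "adm m (psc c x) - psc c (adm m x) \<in> I" by simp
next
  have fm: "fs m" using m by (rule P_fs)
  fix x y assume x: "x \<in> P" and y: "y \<in> P"
  have fx: "fs x" "fs y" using x y by (auto intro: P_fs)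
  have fxy: "fs (mul x y)" "fs (mul m x)" "fs (mul x m)" "fs (mul m y)" "fs (mul y m)"
    using fx fm by (auto intro: fs_pmul)
  have "adm m (mul x y) = mul (adm m x) y + mul x (adm m y)"
    using x y fx fm fxy
    by (simp add: adm_apply P_mul pmul_diff_left pmul_diff_right pmul_assoc algebra_simps)
  then show "adm m (mul x y) - (mul (adm m x) y + mul x (adm m y)) \<in> I" by simp
qed

lemma adm_add: "m1 \<in> P \<Longrightarrow> m2 \<in> P \<Longrightarrow> adm (m1 + m2) = adm m1 + adm m2"
  by (rule ext) (auto simp: adm_def pmul_add_left pmul_add_right P_fs)

lemma adm_psc: "m \<in> P \<Longrightarrow> adm (psc c m) = Dsc c (adm m)"
  by (rule ext) (auto simp: adm_def pmul_psc_left pmul_psc_right P_fs PV.scale_right_diff_distrib)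

lemma adm_zero: "adm 0 = 0"
  by (rule ext) (simp add: adm_def)

lemma Inn_iff: "D \<in> InnS \<longleftrightarrow> D \<in> DerS \<and> (\<exists>m\<in>P. D - adm m \<in> ZI)"
  by (simp add: Inn_def ZI_def psub_eq adm_def)

lemma Zc_iff: "z \<in> Zc \<longleftrightarrow> z \<in> P \<and> adm z \<in> ZI"
  by (simp add: center_rep_def ZI_def psub_eq adm_def)

lemma Inn_subspace: "DV.subspace InnS"
  unfolding DV.subspace_def
proof (intro conjI ballI allI)
  show "0 \<in> InnS" unfolding Inn_iff
    using DV.subspace_0[OF Der_subspace] DV.subspace_0[OF ZI_subspace] by (auto intro!: bexI[of _ 0] simp: adm_zero)
next
  fix D1 D2 assume "D1 \<in> InnS" "D2 \<in> InnS"
  then obtain m1 m2 where D: "D1 \<in> DerS" "D2 \<in> DerS" and m: "m1 \<in> P" "m2 \<in> P"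
    "D1 - adm m1 \<in> ZI" "D2 - adm m2 \<in> ZI" unfolding Inn_iff by blast
  have eq: "(D1 + D2) - adm (m1 + m2) = (D1 - adm m1) + (D2 - adm m2)"
    using m by (simp add: adm_add)
  have "(D1 + D2) - adm (m1 + m2) \<in> ZI" unfolding eq by (rule DV.subspace_add[OF ZI_subspace m(3) m(4)])
  then show "D1 + D2 \<in> InnS" unfolding Inn_iff
    using D m DV.subspace_add[OF Der_subspace] P_add by blast
next
  fix c D assume "D \<in> InnS"
  then obtain m where D: "D \<in> DerS" and m: "m \<in> P" "D - adm m \<in> ZI" unfolding Inn_iff by blast
  have eq: "Dsc c D - adm (psc c m) = Dsc c (D - adm m)"
    using m by (simp add: adm_psc DV.scale_right_diff_distrib)
  have "Dsc c D - adm (psc c m) \<in> ZI" unfolding eq by (rule DV.subspace_scale[OF ZI_subspace m(2)])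
  then show "Dsc c D \<in> InnS" unfolding Inn_iff
    using D m DV.subspace_scale[OF Der_subspace] P_psc by blast
qed

lemma Zc_subspace: "PV.subspace Zc"
  unfolding PV.subspace_def
proof (intro conjI ballI allI)
  show "0 \<in> Zc" unfolding Zc_iff using DV.subspace_0[OF ZI_subspace] by (simp add: adm_zero)
next
  fix x y assume "x \<in> Zc" "y \<in> Zc"
  then show "x + y \<in> Zc" unfolding Zc_iff
    using DV.subspace_add[OF ZI_subspace] by (simp add: adm_add P_add)
next
  fix c x assume "x \<in> Zc"
  then show "psc c x \<in> Zc" unfolding Zc_iff
    using DV.subspace_scale[OF ZI_subspace] by (simp add: adm_psc P_psc)
qed

lemma I_Zc: "I \<subseteq> Zc"
proof
  fix z assume z: "z \<in> I"
  then have zP: "z \<in> P" using I_sub by blast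
  have "adm z x \<in> I" if x: "x \<in> P" for x
    unfolding adm_apply[OF x] by (rule I_diff[OF I_mul_right[OF z x] I_mul_left[OF z x]])
  then have "adm z \<in> ZI" unfolding ZI_def by blast
  then show "z \<in> Zc" using zP Zc_iff by blast
qed

lemma Zc_P: "Zc \<subseteq> P" using Zc_iff by blast

lemma I0_Inn: "I0 \<subseteq> InnS"
proof
  fix D assume "D \<in> I0"
  then have "D \<in> DerS" "D - adm 0 \<in> ZI" by (auto simp: I0_def adm_zero)
  then show "D \<in> InnS" unfolding Inn_iff using P_0 by blast
qed

lemma Inn_Der: "InnS \<subseteq> DerS" using Inn_iff by blast

lemma P_modspan: "P \<subseteq> PV.modspan (ind ` Q) I"
proof
  fix x assume "x \<in> P"
  then obtain c where "x - lc c Q \<in> I" using Q_span by blast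
  then show "x \<in> PV.modspan (ind ` Q) I" unfolding PV.modspan_def using lc_span by blast
qed

lemma dim_P: "qdim psc (+) 0 P I = card Q"
proof -
  obtain qs where qs: "set qs = Q" "distinct qs" using finite_distinct_list[OF Q_fin] by blast
  have "qdim psc (+) 0 P I = length (map (ind :: _ \<Rightarrow> _ \<Rightarrow> 'k) qs)"
  proof (rule PV.qdim_eqI[OF I_subspace])
    show "set (map ind qs) \<subseteq> P" using qs by (auto intro: ind_pathalg Q_valid)
    show "PV.indepW I (map ind qs)"
      unfolding PV.indepW_def
    proof (rule allI, rule impI)
      fix c assume "PV.lcomb c (map ind qs) \<in> I"
      then have "lc (\<lambda>q. c (PV.idx qs q)) Q \<in> I"
        unfolding PV.lcomb_map_set[OF qs(2)] lc_def qs(1) .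
      then have z: "\<And>q. q \<in> Q \<Longrightarrow> c (PV.idx qs q) = 0" using Q_indep by blast
      show "\<forall>i<length (map ind qs). c i = 0"
      proof (intro allI impI)
        fix i assume "i < length (map ind qs)"
        then have "i < length qs" by simp
        then show "c i = 0" using z[of "qs ! i"] qs PV.idx_nth[OF qs(2)] by auto
      qed
    qed
    show "P \<subseteq> PV.modspan (set (map ind qs)) I" using P_modspan qs by simp
  qed
  then show ?thesis using qs distinct_card by fastforce
qed

lemma dim_add_center: "qdim psc (+) 0 P I = qdim psc (+) 0 P Zc + qdim psc (+) 0 Zc I"
  by (rule PV.qdim_add[OF I_subspace Zc_subspace P_sub I_Zc Zc_P _ P_modspan]) (simp add: Q_fin)

lemma dim_Inn: "qdim Dsc (+) 0 InnS I0 = qdim psc (+) 0 P Zc"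
proof (rule PDV.qdim_transfer[OF Zc_subspace P_sub Zc_P I0_subspace _ _, where \<phi> = adm and B = "ind ` Q"])
  show "finite (ind ` Q)" using Q_fin by simp
  show "P \<subseteq> PV.modspan (ind ` Q) Zc" using P_modspan PV.modspan_mono[OF I_Zc] by blast
  show "\<And>x y. x \<in> P \<Longrightarrow> y \<in> P \<Longrightarrow> adm (x + y) = adm x + adm y" by (rule adm_add)
  show "\<And>c x. x \<in> P \<Longrightarrow> adm (psc c x) = Dsc c (adm x)" by (rule adm_psc)
  show "\<And>x. x \<in> P \<Longrightarrow> adm x \<in> InnS"
  proof -
    fix x assume x: "x \<in> P"
    have "adm x - adm x \<in> ZI" using DV.subspace_0[OF ZI_subspace] by simp
    then show "adm x \<in> InnS" unfolding Inn_iff using adm_der[OF x] x by blast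
  qed
  show "\<And>y. y \<in> InnS \<Longrightarrow> \<exists>x\<in>P. y - adm x \<in> I0"
    unfolding Inn_iff I0_def using adm_der DV.subspace_diff[OF Der_subspace] by blast
  show "\<And>x. x \<in> P \<Longrightarrow> adm x \<in> I0 \<longleftrightarrow> x \<in> Zc"
    unfolding I0_def Zc_iff using adm_der by blast
qed

end


context QA begin

lemma der_zero: "D \<in> DerS \<Longrightarrow> D 0 \<in> I"
proof -
  assume D: "D \<in> DerS"
  have "D (0 + 0) - (D 0 + D 0) \<in> I" using derD(2)[OF D P_0 P_0] .
  then have "- D 0 \<in> I" by simp
  then show "D 0 \<in> I" using I_neg by fastforce
qed

lemma congr_left: "a - b \<in> I \<Longrightarrow> a \<in> P \<Longrightarrow> b \<in> P \<Longrightarrow> y \<in> P \<Longrightarrow> mul a y - mul b y \<in> I"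
  by (subst pmul_diff_left[symmetric]) (auto intro: P_fs I_mul_right)

lemma congr_right: "a - b \<in> I \<Longrightarrow> a \<in> P \<Longrightarrow> b \<in> P \<Longrightarrow> y \<in> P \<Longrightarrow> mul y a - mul y b \<in> I"
  by (subst pmul_diff_right[symmetric]) (auto intro: P_fs I_mul_left)

lemma der_sum:
  assumes D: "D \<in> DerS" and F: "\<And>i. i \<in> A \<Longrightarrow> F i \<in> P"
  shows "D (\<Sum>i\<in>A. F i) - (\<Sum>i\<in>A. D (F i)) \<in> I"
  using F
proof (induct A rule: infinite_finite_induct)
  case (infinite A) then show ?case using der_zero[OF D] by (simp only: sum.infinite diff_zero not_False_eq_True)
next
  case empty then show ?case using der_zero[OF D] by (simp only: sum.empty diff_zero)
next
  case (insert a A)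
  have FA: "(\<Sum>i\<in>A. F i) \<in> P" using insert by (auto intro: P_sum)
  have Fa: "F a \<in> P" using insert by auto
  have eq: "D (\<Sum>i\<in>insert a A. F i) - (\<Sum>i\<in>insert a A. D (F i))
    = (D (F a + (\<Sum>i\<in>A. F i)) - (D (F a) + D (\<Sum>i\<in>A. F i))) + (D (\<Sum>i\<in>A. F i) - (\<Sum>i\<in>A. D (F i)))"
    using insert(1,2) by (simp add: algebra_simps)
  show ?case unfolding eq
    by (rule I_add[OF derD(2)[OF D Fa FA] insert(3)]) (use insert in auto)
qed

lemma vanish:
  assumes D: "D \<in> DerS" and vv: "\<And>v. v \<in> V \<Longrightarrow> D (ind (v, [])) \<in> I"
    and ve: "\<And>e. e \<in> E \<Longrightarrow> D (ind (s e, [e])) \<in> I"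
  shows "D \<in> ZI"
proof -
  have path: "D (ind (v, as)) \<in> I" if "valid (v, as)" for v as
    using that
  proof (induct as rule: rev_induct)
    case Nil then show ?case using vv valid_start by fastforce
  next
    case (snoc e as)
    note vs = valid_snoc[OF snoc(2)]
    have eq: "ind (v, as @ [e]) = mul (ind (v, as)) (ind (s e, [e]))"
      using vs(3) by (simp add: pmul_ind)
    have x: "ind (v, as) \<in> P" using vs(1) by (rule ind_pathalg)
    have vy: "valid (s e, [e])" using vs(2) ends by (auto simp: valid_path_def)
    have y: "ind (s e, [e]) \<in> P" using vy by (rule ind_pathalg)
    have a: "mul (D (ind (v, as))) (ind (s e, [e])) \<in> I" using snoc(1)[OF vs(1)] y by (rule I_mul_right)
    have b: "mul (ind (v, as)) (D (ind (s e, [e]))) \<in> I" using ve[OF vs(2)] x by (rule I_mul_left)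
    have c: "D (mul (ind (v, as)) (ind (s e, [e]))) - (mul (D (ind (v, as))) (ind (s e, [e])) + mul (ind (v, as)) (D (ind (s e, [e])))) \<in> I"
      using derD(4)[OF D x y] .
    have "D (mul (ind (v, as)) (ind (s e, [e]))) = (D (mul (ind (v, as)) (ind (s e, [e]))) - (mul (D (ind (v, as))) (ind (s e, [e])) + mul (ind (v, as)) (D (ind (s e, [e]))))) + (mul (D (ind (v, as))) (ind (s e, [e])) + mul (ind (v, as)) (D (ind (s e, [e]))))"
      by simp
    also have "\<dots> \<in> I" by (rule I_add[OF c I_add[OF a b]])
    finally show ?case unfolding eq .
  qed
  have "D x \<in> I" if x: "x \<in> P" for x
  proof -
    let ?A = "{p. x p \<noteq> 0}"
    have fA: "finite ?A" using P_fs[OF x] by (simp add: fs_def)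
    have ex: "x = (\<Sum>p\<in>?A. psc (x p) (ind p))" by (rule fs_expand[OF P_fs[OF x] fA]) simp
    have vp: "valid p" if "p \<in> ?A" for p using pathalg_valid[OF x] that by simp
    have F: "\<And>p. p \<in> ?A \<Longrightarrow> psc (x p) (ind p) \<in> P" using vp by (auto intro: P_psc ind_pathalg)
    have t: "D (psc (x p) (ind p)) \<in> I" if p: "p \<in> ?A" for p
    proof -
      have i: "ind p \<in> P" using vp[OF p] by (rule ind_pathalg)
      obtain v as where pv: "p = (v, as)" by (cases p)
      have di: "D (ind p) \<in> I" using path[of v as] vp[OF p] pv by simp
      have "D (psc (x p) (ind p)) = (D (psc (x p) (ind p)) - psc (x p) (D (ind p))) + psc (x p) (D (ind p))"
        by simp
      also have "\<dots> \<in> I" by (rule I_add[OF derD(3)[OF D i] I_psc[OF di]])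
      finally show ?thesis .
    qed
    have "D x = (D (\<Sum>p\<in>?A. psc (x p) (ind p)) - (\<Sum>p\<in>?A. D (psc (x p) (ind p)))) + (\<Sum>p\<in>?A. D (psc (x p) (ind p)))"
      using ex by simp
    also have "\<dots> \<in> I" by (rule I_add[OF der_sum[OF D F] I_sum[OF t]]) auto
    finally show ?thesis .
  qed
  then show ?thesis unfolding ZI_def by blast
qed

end


context QA begin

definition Drq :: "'e \<Rightarrow> ('v,'e) path \<Rightarrow> (('v,'e) path \<Rightarrow> 'k) \<Rightarrow> (('v,'e) path \<Rightarrow> 'k)" where
  "Drq r q = Dlin (dl r q)"

definition J :: "('e \<times> ('v,'e) path) set" where
  "J = {(r, q). r \<in> E \<and> q \<in> Q \<and> s r = path_start q \<and> h r = path_end h q}"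

lemma J_D: "(r, q) \<in> J \<Longrightarrow> r \<in> E \<and> q \<in> Q \<and> s r = fst q \<and> h r = path_end h q"
  by (simp add: J_def path_start_def)

lemma Drq_der: assumes rq: "(r, q) \<in> J" shows "Drq r q \<in> DerS"
proof -
  have r: "r \<in> E" and q: "q \<in> Q" and sr: "s r = fst q" and hr: "h r = path_end h q"
    using J_D[OF rq] by auto
  have vq: "valid q" using q by (rule Q_valid)
  show ?thesis unfolding Drq_def
  proof (rule derI)
    fix x assume x: "x \<in> P"
    show "Dlin (dl r q) x \<in> P" by (rule Dlin_pathalg[OF x]) (rule dl_pathalg[OF ends vq sr hr])
  next
    fix x y assume x: "x \<in> P" and y: "y \<in> P"
    have "Dlin (dl r q) (x + y) = Dlin (dl r q) x + Dlin (dl r q) y"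
      by (rule Dlin_add) (use x y in \<open>auto intro: P_fs\<close>)
    then show "Dlin (dl r q) (x + y) - (Dlin (dl r q) x + Dlin (dl r q) y) \<in> I" by simp
  next
    fix c x assume x: "x \<in> P"
    have "Dlin (dl r q) (psc c x) = psc c (Dlin (dl r q) x)"
      by (rule Dlin_psc) (use x in \<open>auto intro: P_fs\<close>)
    then show "Dlin (dl r q) (psc c x) - psc c (Dlin (dl r q) x) \<in> I" by simp
  next
    fix x y assume x: "x \<in> P" and y: "y \<in> P"
    have "Dlin (dl r q) (mul x y) = mul (Dlin (dl r q) x) y + mul x (Dlin (dl r q) y)"
    proof (rule Dlin_leibniz[OF fs_dl P_fs[OF x] P_fs[OF y]])
      fix a b assume a: "x a \<noteq> 0" and b: "y b \<noteq> 0"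
      have va: "valid a" using pathalg_valid[OF x a] .
      have vb: "valid b" using pathalg_valid[OF y b] .
      show "Dlin (dl r q) (mul (ind a) (ind b)) = mul (dl r q a) (ind b) + mul (ind a) (dl r q b)"
        by (rule dl_leibniz[OF ends vq sr hr va vb])
    qed
    then show "Dlin (dl r q) (mul x y) - (mul (Dlin (dl r q) x) y + mul x (Dlin (dl r q) y)) \<in> I"
      by simp
  qed
qed

lemma Drq_vertex: "Drq r q (ind (v, [])) = 0" by (simp add: Drq_def dl_vertex fun_eq_iff)

lemma Drq_arrow: "s r = fst q \<Longrightarrow> Drq r q (ind (s e, [e])) = (if e = r then ind q else 0)"
  by (simp add: Drq_def dl_arrow)

lemma ind_notin_I: "q \<in> Q \<Longrightarrow> ind q \<notin> I"
proof
  assume q: "q \<in> Q" and "ind q \<in> I"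
  then have "lc (\<lambda>_. 1) {q} \<in> I" by (simp add: lc_def)
  from coeff_zero[OF _ this] q show False by simp
qed

lemma ind_diff_notin_I: "q \<in> Q \<Longrightarrow> q' \<in> Q \<Longrightarrow> q \<noteq> q' \<Longrightarrow> ind q - ind q' \<notin> I"
proof
  assume q: "q \<in> Q" "q' \<in> Q" "q \<noteq> q'" and "ind q - ind q' \<in> I"
  moreover have "lc (\<lambda>x. if x = q then 1 else -1) {q, q'} = ind q - ind q'"
    using q(3) by (simp add: lc_def psc_minus_one)
  ultimately have "lc (\<lambda>x. if x = q then 1 else -1) {q, q'} \<in> I" by simp
  from coeff_zero[OF _ this, of q] q show False by simp
qed

lemma Drq_Dop: assumes rq: "(r, q) \<in> J" shows "Drq r q \<in> Dop V E s h I r q"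
proof -
  have sr: "s r = fst q" using J_D[OF rq] by simp
  show ?thesis unfolding Dop_def using Drq_der[OF rq]
    by (simp add: Drq_arrow[OF sr] Drq_vertex psub_eq)
qed

lemma card_B2: "card (B2 V E s h I Q) = card J"
proof -
  have B2: "B2 V E s h I Q = (\<lambda>(r, q). Dop V E s h I r q) ` J"
    by (simp add: B2_def J_def)
  have "inj_on (\<lambda>(r, q). Dop V E s h I r q) J"
  proof (rule inj_onI, clarify)
    fix r q r' q' assume rq: "(r, q) \<in> J" and rq': "(r', q') \<in> J"
      and eq: "Dop V E s h I r q = Dop V E s h I r' q'"
    have sr: "s r = fst q" and q: "q \<in> Q" and r: "r \<in> E" using J_D[OF rq] by auto
    have q': "q' \<in> Q" using J_D[OF rq'] by auto
    have "Drq r q \<in> Dop V E s h I r' q'" using Drq_Dop[OF rq] eq by simp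
    then have d1: "Drq r q (ind (s r', [r'])) - ind q' \<in> I"
      and d2: "\<forall>e\<in>E. e \<noteq> r' \<longrightarrow> Drq r q (ind (s e, [e])) \<in> I"
      by (auto simp: Dop_def psub_eq)
    show "r = r' \<and> q = q'"
    proof (cases "r = r'")
      case False
      then have "ind q \<in> I" using d2 r Drq_arrow[OF sr, of r] by auto
      then show ?thesis using ind_notin_I[OF q] by simp
    next
      case True
      then have "ind q - ind q' \<in> I" using d1 Drq_arrow[OF sr, of r] by simp
      then show ?thesis using ind_diff_notin_I[OF q q'] True by blast
    qed
  qed
  then show ?thesis unfolding B2 by (rule card_image)
qed

definition Q' :: "('v,'e) path set" where "Q' = Q - QC h Q"

lemma card_QC: "card (QC h Q) + card Q' = card Q"
proof -
  have "QC h Q \<subseteq> Q" by (auto simp: QC_def)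
  then show ?thesis unfolding Q'_def using Q_fin
    by (metis card_Diff_subset card_mono finite_subset le_add_diff_inverse)
qed

lemma Q'_iff: "q \<in> Q' \<longleftrightarrow> q \<in> Q \<and> fst q \<noteq> path_end h q"
  by (auto simp: Q'_def QC_def path_start_def)

lemma J_fin: "finite E \<Longrightarrow> finite J"
  by (rule finite_subset[of _ "E \<times> Q"]) (auto simp: J_def Q_fin)

end


locale QA2 = QA + assumes finE: "finite E"
begin

lemma J_fin': "finite J" using J_fin[OF finE] .

lemma vertex_P: "v \<in> V \<Longrightarrow> ind (v, []) \<in> P"
  by (rule ind_pathalg) (simp add: valid_path_def)

lemma arrow_P: "e \<in> E \<Longrightarrow> ind (s e, [e]) \<in> P"
  by (rule ind_pathalg) (use ends in \<open>auto simp: valid_path_def\<close>)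

lemma adm_vertex:
  assumes v: "v \<in> V"
  shows "adm (ind q) (ind (v, [])) = psc ((if path_end h q = v then 1 else 0) - (if fst q = v then 1 else 0)) (ind q)"
  unfolding adm_apply[OF vertex_P[OF v]] pmul_vertex_right pmul_vertex_left
  by (auto simp: fun_eq_iff)

lemma lcomb_bs_apply:
  "((\<Sum>j\<in>A. Dsc (c1 j) (d j)) + (\<Sum>q\<in>B. Dsc (c2 q) (a q))) x
    = (\<Sum>j\<in>A. psc (c1 j) (d j x)) + (\<Sum>q\<in>B. psc (c2 q) (a q x))"
  by (simp add: sum_fun_apply)

lemma arrow_sum:
  assumes r0: "r0 \<in> E"
  shows "(\<Sum>j\<in>J. psc (c1 j) (Drq (fst j) (snd j) (ind (s r0, [r0]))))
     = lc (\<lambda>q. c1 (r0, q)) {q. (r0, q) \<in> J}"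
proof -
  have "(\<Sum>j\<in>J. psc (c1 j) (Drq (fst j) (snd j) (ind (s r0, [r0]))))
      = (\<Sum>j\<in>J. if fst j = r0 then psc (c1 j) (ind (snd j)) else 0)"
  proof (rule sum.cong[OF refl])
    fix j assume j: "j \<in> J"
    obtain r q where jv: "j = (r, q)" by (cases j)
    have "s r = fst q" using J_D j jv by auto
    then show "psc (c1 j) (Drq (fst j) (snd j) (ind (s r0, [r0]))) = (if fst j = r0 then psc (c1 j) (ind (snd j)) else 0)"
      unfolding jv by (simp add: Drq_arrow fun_eq_iff)
  qed
  also have "\<dots> = (\<Sum>j\<in>{j\<in>J. fst j = r0}. psc (c1 j) (ind (snd j)))"
    by (rule sum.inter_filter[symmetric]) (use J_fin' in auto)
  also have "\<dots> = (\<Sum>q\<in>{q. (r0, q) \<in> J}. psc (c1 (r0, q)) (ind q))"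
  proof -
    have "{j\<in>J. fst j = r0} = (\<lambda>q. (r0, q)) ` {q. (r0, q) \<in> J}" by force
    moreover have "inj_on (\<lambda>q. (r0, q)) {q. (r0, q) \<in> J}" by (auto simp: inj_on_def)
    ultimately show ?thesis by (simp add: sum.reindex)
  qed
  finally show ?thesis by (simp add: lc_def)
qed

lemma Q'_fin: "finite Q'" using Q_fin by (simp add: Q'_def)

lemma Q'_sub: "Q' \<subseteq> Q" by (auto simp: Q'_def)

lemma indep_part:
  assumes T: "(\<Sum>j\<in>J. Dsc (c1 j) (Drq (fst j) (snd j))) + (\<Sum>q\<in>Q'. Dsc (c2 q) (adm (ind q))) \<in> ZI"
  shows "\<forall>q\<in>Q'. c2 q = 0" "\<forall>j\<in>J. c1 j = 0"
proof -
  let ?T = "(\<Sum>j\<in>J. Dsc (c1 j) (Drq (fst j) (snd j))) + (\<Sum>q\<in>Q'. Dsc (c2 q) (adm (ind q)))"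
  have TI: "?T x \<in> I" if "x \<in> P" for x using T that unfolding ZI_def by blast
  show c2: "\<forall>q\<in>Q'. c2 q = 0"
  proof
    fix q0 assume q0: "q0 \<in> Q'"
    let ?v = "path_end h q0"
    have v: "?v \<in> V" using valid_end[OF Q_valid ends] q0 Q'_sub by blast
    have "?T (ind (?v, [])) = (\<Sum>j\<in>J. psc (c1 j) (Drq (fst j) (snd j) (ind (?v, []))))
        + (\<Sum>q\<in>Q'. psc (c2 q) (adm (ind q) (ind (?v, []))))"
      by (rule lcomb_bs_apply)
    also have "\<dots> = lc (\<lambda>q. c2 q * ((if path_end h q = ?v then 1 else 0) - (if fst q = ?v then 1 else 0))) Q'"
      unfolding adm_vertex[OF v] Drq_vertex lc_def by (simp add: fun_eq_iff)
    finally have "lc (\<lambda>q. c2 q * ((if path_end h q = ?v then 1 else 0) - (if fst q = ?v then 1 else 0))) Q' \<in> I"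
      using TI[OF vertex_P[OF v]] by simp
    from coeff_zero[OF Q'_sub this q0] show "c2 q0 = 0" using q0 by (simp add: Q'_iff)
  qed
  show "\<forall>j\<in>J. c1 j = 0"
  proof
    fix j0 assume j0: "j0 \<in> J"
    obtain r0 q0 where jv: "j0 = (r0, q0)" by (cases j0)
    have r0: "r0 \<in> E" using J_D j0 jv by auto
    have "?T (ind (s r0, [r0])) = (\<Sum>j\<in>J. psc (c1 j) (Drq (fst j) (snd j) (ind (s r0, [r0]))))
        + (\<Sum>q\<in>Q'. psc (c2 q) (adm (ind q) (ind (s r0, [r0]))))"
      by (rule lcomb_bs_apply)
    also have "\<dots> = lc (\<lambda>q. c1 (r0, q)) {q. (r0, q) \<in> J}"
      unfolding arrow_sum[OF r0] using c2 by (simp add: fun_eq_iff sum_fun_apply)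
    finally have lcI: "lc (\<lambda>q. c1 (r0, q)) {q. (r0, q) \<in> J} \<in> I"
      using TI[OF arrow_P[OF r0]] by simp
    have sub: "{q. (r0, q) \<in> J} \<subseteq> Q" using J_D by blast
    from coeff_zero[OF sub lcI, of q0] show "c1 j0 = 0" using j0 jv by auto
  qed
qed

lemma span_part:
  assumes D: "D \<in> DerS"
  shows "\<exists>b ca. D - ((\<Sum>q\<in>Q'. Dsc (b q) (adm (ind q))) + (\<Sum>j\<in>J. Dsc (ca j) (Drq (fst j) (snd j)))) \<in> I0"
proof -
  have "\<forall>v\<in>V. \<exists>c. D (ind (v, [])) - lc c Q \<in> I"
    using Q_span derD(1)[OF D] vertex_P by blast
  then obtain cv where cv: "\<And>v. v \<in> V \<Longrightarrow> D (ind (v, [])) - lc (cv v) Q \<in> I" by metis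
  have DivP: "\<And>v. v \<in> V \<Longrightarrow> D (ind (v, [])) \<in> P" using derD(1)[OF D] vertex_P by blast
  have lcQ: "\<And>c. lc c Q \<in> P" by (rule lc_P) simp
  have mulR: "mul (D (ind (u, []))) (ind (v, [])) - lc (\<lambda>q. if path_end h q = v then cv u q else 0) Q \<in> I"
    if u: "u \<in> V" and v: "v \<in> V" for u v
    using congr_left[OF cv[OF u] DivP[OF u] lcQ vertex_P[OF v]] by (simp add: lc_vertex_right)
  have mulL: "mul (ind (u, [])) (D (ind (v, []))) - lc (\<lambda>q. if fst q = u then cv v q else 0) Q \<in> I"
    if u: "u \<in> V" and v: "v \<in> V" for u v
    using congr_right[OF cv[OF v] DivP[OF v] lcQ vertex_P[OF u]] by (simp add: lc_vertex_left)
  have Leib: "D (mul (ind (u, [])) (ind (v, []))) - (mul (D (ind (u, []))) (ind (v, [])) + mul (ind (u, [])) (D (ind (v, [])))) \<in> I"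
    if u: "u \<in> V" and v: "v \<in> V" for u v
    using derD(4)[OF D vertex_P[OF u] vertex_P[OF v]] .
  have A: "cv v q - ((if path_end h q = v then cv v q else 0) + (if fst q = v then cv v q else 0)) = 0"
    if v: "v \<in> V" and q: "q \<in> Q" for v q
  proof -
    let ?X = "D (ind (v, []))" and ?M1 = "mul (D (ind (v, []))) (ind (v, []))" and ?M2 = "mul (ind (v, [])) (D (ind (v, [])))"
    let ?R = "lc (\<lambda>q. if path_end h q = v then cv v q else 0) Q" and ?L = "lc (\<lambda>q. if fst q = v then cv v q else 0) Q"
    have vv: "mul (ind (v, [])) (ind (v, [])) = ind (v, [])" by (simp add: pmul_vertex_left)
    have l: "?X - (?M1 + ?M2) \<in> I" using Leib[OF v v] unfolding vv .
    have "lc (cv v) Q - (?R + ?L) = - (?X - lc (cv v) Q) + (?X - (?M1 + ?M2)) + (?M1 - ?R) + (?M2 - ?L)"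
      by (simp add: algebra_simps)
    also have "\<dots> \<in> I"
      by (intro I_add I_neg cv[OF v] l mulR[OF v v] mulL[OF v v])
    finally have "lc (\<lambda>q. cv v q - ((if path_end h q = v then cv v q else 0) + (if fst q = v then cv v q else 0))) Q \<in> I"
      by (simp add: lc_add lc_diff)
    from Q_indep[OF this q] show ?thesis .
  qed
  have B: "(if path_end h q = v then cv u q else 0) + (if fst q = u then cv v q else 0) = 0"
    if u: "u \<in> V" and v: "v \<in> V" and uv: "u \<noteq> v" and q: "q \<in> Q" for u v q
  proof -
    let ?M1 = "mul (D (ind (u, []))) (ind (v, []))" and ?M2 = "mul (ind (u, [])) (D (ind (v, [])))"
    let ?R = "lc (\<lambda>q. if path_end h q = v then cv u q else 0) Q" and ?L = "lc (\<lambda>q. if fst q = u then cv v q else 0) Q"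
    have uv0: "mul (ind (u, [])) (ind (v, [])) = 0" using uv by (simp add: pmul_vertex_left)
    have l: "D 0 - (?M1 + ?M2) \<in> I" using Leib[OF u v] unfolding uv0 .
    have "?R + ?L = - (?M1 - ?R) - (?M2 - ?L) + D 0 - (D 0 - (?M1 + ?M2))"
      by (simp add: algebra_simps)
    also have "\<dots> \<in> I"
      by (intro I_add I_diff I_neg mulR[OF u v] mulL[OF u v] der_zero[OF D] l)
    finally have "lc (\<lambda>q. (if path_end h q = v then cv u q else 0) + (if fst q = u then cv v q else 0)) Q \<in> I"
      by (simp add: lc_add)
    from Q_indep[OF this q] show ?thesis .
  qed
  define b where "b q = cv (path_end h q) q" for q
  have coef: "(if q \<in> Q' then b q * ((if path_end h q = v then 1 else 0) - (if fst q = v then 1 else 0)) else 0) = cv v q"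
    if v: "v \<in> V" and q: "q \<in> Q" for v q
  proof -
    have u: "fst q \<in> V" using valid_start[OF Q_valid[OF q]] .
    have w: "path_end h q \<in> V" using valid_end[OF Q_valid[OF q] ends] .
    show ?thesis
    proof (cases "q \<in> Q'")
      case False
      then have uw: "fst q = path_end h q" using q by (simp add: Q'_iff)
      have "cv v q = 0" using A[OF v q] uw by (cases "path_end h q = v") auto
      then show ?thesis using False by simp
    next
      case True
      then have uw: "fst q \<noteq> path_end h q" by (simp add: Q'_iff)
      consider "v = path_end h q" | "v = fst q" | "v \<noteq> path_end h q" "v \<noteq> fst q" by blast
      then show ?thesis
      proof cases
        case 1 then show ?thesis using True uw by (simp add: b_def)
      next
        case 2
        have "cv (path_end h q) q + cv (fst q) q = 0" using B[OF u w uw q] by (simp add: add.commute)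
        then have neg: "- cv (path_end h q) q = cv (fst q) q" by (rule minus_unique)
        then show ?thesis using True uw 2 by (simp add: b_def)
      next
        case 3 then show ?thesis using A[OF v q] True by auto
      qed
    qed
  qed
  have C: "D (ind (v, [])) - (\<Sum>q\<in>Q'. psc (b q) (adm (ind q) (ind (v, [])))) \<in> I" if v: "v \<in> V" for v
  proof -
    have "(\<Sum>q\<in>Q'. psc (b q) (adm (ind q) (ind (v, []))))
        = lc (\<lambda>q. b q * ((if path_end h q = v then 1 else 0) - (if fst q = v then 1 else 0))) Q'"
      unfolding adm_vertex[OF v] lc_def by simp
    also have "\<dots> = lc (cv v) Q"
      by (subst lc_ext[OF Q'_sub], rule lc_cong) (use coef[OF v] in auto)
    finally show ?thesis using cv[OF v] by simp
  qed
  define D1 where "D1 = D - (\<Sum>q\<in>Q'. Dsc (b q) (adm (ind q)))"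
  have admQ: "adm (ind q) \<in> DerS" if "q \<in> Q" for q
    using adm_der[OF ind_pathalg[OF Q_valid[OF that]]] .
  have D1D: "D1 \<in> DerS" unfolding D1_def
    by (intro DV.subspace_diff[OF Der_subspace D] DV.subspace_sum[OF Der_subspace]
        DV.subspace_scale[OF Der_subspace] admQ) (use Q'_sub in auto)
  have D1_apply: "D1 x = D x - (\<Sum>q\<in>Q'. psc (b q) (adm (ind q) x))" for x
    by (simp add: D1_def sum_fun_apply)
  have D1v: "D1 (ind (v, [])) \<in> I" if "v \<in> V" for v using C[OF that] by (simp add: D1_apply)
  have "\<forall>e\<in>E. \<exists>c. D1 (ind (s e, [e])) - lc c Q \<in> I"
    using Q_span derD(1)[OF D1D] arrow_P by blast
  then obtain ca where ca: "\<And>e. e \<in> E \<Longrightarrow> D1 (ind (s e, [e])) - lc (ca e) Q \<in> I" by metis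
  have DiaP: "\<And>e. e \<in> E \<Longrightarrow> D1 (ind (s e, [e])) \<in> P" using derD(1)[OF D1D] arrow_P by blast
  have sV: "s e \<in> V" "h e \<in> V" if "e \<in> E" for e using ends that by auto
  have E1: "ca e q - (if fst q = s e then ca e q else 0) = 0" if e: "e \<in> E" and q: "q \<in> Q" for e q
  proof -
    let ?ia = "ind (s e, [e])" and ?iv = "ind (s e, [])"
    have eq: "mul ?iv ?ia = ?ia" by (simp add: pmul_vertex_left)
    let ?M1 = "mul (D1 ?iv) ?ia" and ?M2 = "mul ?iv (D1 ?ia)" and ?X = "D1 ?ia"
    let ?L = "lc (\<lambda>q. if fst q = s e then ca e q else 0) Q"
    have l: "?X - (?M1 + ?M2) \<in> I" using derD(4)[OF D1D vertex_P[OF sV(1)[OF e]] arrow_P[OF e]] unfolding eq .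
    have m1: "?M1 \<in> I" by (rule I_mul_right[OF D1v[OF sV(1)[OF e]] arrow_P[OF e]])
    have m2: "?M2 - ?L \<in> I"
      using congr_right[OF ca[OF e] DiaP[OF e] lcQ vertex_P[OF sV(1)[OF e]]] by (simp add: lc_vertex_left)
    have "lc (ca e) Q - ?L = - (?X - lc (ca e) Q) + (?X - (?M1 + ?M2)) + ?M1 + (?M2 - ?L)"
      by (simp add: algebra_simps)
    also have "\<dots> \<in> I" by (intro I_add I_neg ca[OF e] l m1 m2)
    finally have "lc (\<lambda>q. ca e q - (if fst q = s e then ca e q else 0)) Q \<in> I" by (simp add: lc_diff)
    from Q_indep[OF this q] show ?thesis .
  qed
  have E2: "ca e q - (if path_end h q = h e then ca e q else 0) = 0" if e: "e \<in> E" and q: "q \<in> Q" for e q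
  proof -
    let ?ia = "ind (s e, [e])" and ?iv = "ind (h e, [])"
    have eq: "mul ?ia ?iv = ?ia" by (simp add: pmul_vertex_right path_end_def)
    let ?M1 = "mul (D1 ?ia) ?iv" and ?M2 = "mul ?ia (D1 ?iv)" and ?X = "D1 ?ia"
    let ?R = "lc (\<lambda>q. if path_end h q = h e then ca e q else 0) Q"
    have l: "?X - (?M1 + ?M2) \<in> I" using derD(4)[OF D1D arrow_P[OF e] vertex_P[OF sV(2)[OF e]]] unfolding eq .
    have m2: "?M2 \<in> I" by (rule I_mul_left[OF D1v[OF sV(2)[OF e]] arrow_P[OF e]])
    have m1: "?M1 - ?R \<in> I"
      using congr_left[OF ca[OF e] DiaP[OF e] lcQ vertex_P[OF sV(2)[OF e]]] by (simp add: lc_vertex_right)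
    have "lc (ca e) Q - ?R = - (?X - lc (ca e) Q) + (?X - (?M1 + ?M2)) + ?M2 + (?M1 - ?R)"
      by (simp add: algebra_simps)
    also have "\<dots> \<in> I" by (intro I_add I_neg ca[OF e] l m1 m2)
    finally have "lc (\<lambda>q. ca e q - (if path_end h q = h e then ca e q else 0)) Q \<in> I" by (simp add: lc_diff)
    from Q_indep[OF this q] show ?thesis .
  qed
  have EJ: "(e, q) \<in> J" if e: "e \<in> E" and q: "q \<in> Q" and nz: "ca e q \<noteq> 0" for e q
  proof -
    have "fst q = s e" using E1[OF e q] nz by (auto split: if_splits)
    moreover have "path_end h q = h e" using E2[OF e q] nz by (auto split: if_splits)
    ultimately show ?thesis using e q by (simp add: J_def path_start_def)
  qed
  define ca' where "ca' j = ca (fst j) (snd j)" for j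
  define D2 where "D2 = D1 - (\<Sum>j\<in>J. Dsc (ca' j) (Drq (fst j) (snd j)))"
  have D2D: "D2 \<in> DerS" unfolding D2_def
    by (intro DV.subspace_diff[OF Der_subspace D1D] DV.subspace_sum[OF Der_subspace]
        DV.subspace_scale[OF Der_subspace]) (auto intro: Drq_der)
  have D2_apply: "D2 x = D1 x - (\<Sum>j\<in>J. psc (ca' j) (Drq (fst j) (snd j) x))" for x
    by (simp add: D2_def sum_fun_apply)
  have "D2 \<in> ZI"
  proof (rule vanish[OF D2D])
    fix v assume v: "v \<in> V"
    show "D2 (ind (v, [])) \<in> I" using D1v[OF v] by (simp add: D2_apply Drq_vertex)
  next
    fix e assume e: "e \<in> E"
    have "(\<Sum>j\<in>J. psc (ca' j) (Drq (fst j) (snd j) (ind (s e, [e])))) = lc (\<lambda>q. ca' (e, q)) {q. (e, q) \<in> J}"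
      by (rule arrow_sum[OF e])
    also have "\<dots> = lc (ca e) Q"
      by (subst lc_ext, use J_D in blast, rule lc_cong) (use EJ[OF e] in \<open>auto simp: ca'_def\<close>)
    finally show "D2 (ind (s e, [e])) \<in> I" using ca[OF e] by (simp add: D2_apply)
  qed
  then have D2I: "D2 \<in> I0" using D2D by (simp add: I0_def)
  have eqD2: "D - ((\<Sum>q\<in>Q'. Dsc (b q) (adm (ind q))) + (\<Sum>j\<in>J. Dsc (ca' j) (Drq (fst j) (snd j)))) = D2"
    by (simp only: D2_def D1_def diff_diff_eq)
  show ?thesis by (rule exI[of _ b], rule exI[of _ ca'], subst eqD2, rule D2I)
qed

end


context QA2 begin

lemma Der_modspan:
  "DerS \<subseteq> DV.modspan ((\<lambda>j. Drq (fst j) (snd j)) ` J \<union> (\<lambda>q. adm (ind q)) ` Q') I0"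
proof
  fix D assume D: "D \<in> DerS"
  obtain b ca where bc: "D - ((\<Sum>q\<in>Q'. Dsc (b q) (adm (ind q))) + (\<Sum>j\<in>J. Dsc (ca j) (Drq (fst j) (snd j)))) \<in> I0"
    using span_part[OF D] by blast
  let ?B = "(\<lambda>j. Drq (fst j) (snd j)) ` J \<union> (\<lambda>q. adm (ind q)) ` Q'"
  have "(\<Sum>q\<in>Q'. Dsc (b q) (adm (ind q))) + (\<Sum>j\<in>J. Dsc (ca j) (Drq (fst j) (snd j))) \<in> DV.span ?B"
    by (intro DV.span_add DV.span_sum DV.span_scale DV.span_base) auto
  then show "D \<in> DV.modspan ?B I0" unfolding DV.modspan_def using bc by blast
qed

lemma dim_Der: "qdim Dsc (+) 0 DerS I0 = card J + card Q'"
proof -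
  obtain js where js: "set js = J" "distinct js" using finite_distinct_list[OF J_fin'] by blast
  obtain qs where qs: "set qs = Q'" "distinct qs" using finite_distinct_list[OF Q'_fin] by blast
  define d where "d j = Drq (fst j) (snd j)" for j
  define a where "a q = adm (ind q)" for q
  define bs where "bs = map d js @ map a qs"
  have lb: "DV.lcomb c bs = (\<Sum>j\<in>J. Dsc (c (DV.idx js j)) (d j)) + (\<Sum>q\<in>Q'. Dsc (c (length js + DV.idx qs q)) (a q))" for c
    unfolding bs_def DV.lcomb_append DV.lcomb_map_set[OF js(2)] DV.lcomb_map_set[OF qs(2)] js(1) qs(1)
    by simp
  have setbs: "set bs = (\<lambda>j. Drq (fst j) (snd j)) ` J \<union> (\<lambda>q. adm (ind q)) ` Q'"
    by (simp add: bs_def js qs d_def a_def)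
  have "qdim Dsc (+) 0 DerS I0 = length bs"
  proof (rule DV.qdim_eqI[OF I0_subspace])
    show "set bs \<subseteq> DerS" unfolding setbs
      using Drq_der adm_der ind_pathalg Q_valid Q'_sub by fastforce
    show "DV.indepW I0 bs"
      unfolding DV.indepW_def
    proof (rule allI, rule impI)
      fix c assume "DV.lcomb c bs \<in> I0"
      then have T: "(\<Sum>j\<in>J. Dsc (c (DV.idx js j)) (Drq (fst j) (snd j))) + (\<Sum>q\<in>Q'. Dsc (c (length js + DV.idx qs q)) (adm (ind q))) \<in> ZI"
        unfolding lb I0_def d_def a_def by simp
      note z = indep_part[OF T]
      show "\<forall>i<length bs. c i = 0"
      proof (intro allI impI)
        fix i assume i: "i < length bs"
        show "c i = 0"
        proof (cases "i < length js")
          case True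
          then have "js ! i \<in> J" using js nth_mem by blast
          then show ?thesis using z(2) DV.idx_nth[OF js(2) True] by auto
        next
          case False
          then have k: "i - length js < length qs" using i by (simp add: bs_def)
          then have "qs ! (i - length js) \<in> Q'" using qs nth_mem by blast
          then have "c (length js + DV.idx qs (qs ! (i - length js))) = 0" using z(1) by auto
          then show ?thesis using DV.idx_nth[OF qs(2) k] False by simp
        qed
      qed
    qed
    show "DerS \<subseteq> DV.modspan (set bs) I0" unfolding setbs by (rule Der_modspan)
  qed
  moreover have "card J = length js" using distinct_card[OF js(2)] js(1) by simp
  moreover have "card Q' = length qs" using distinct_card[OF qs(2)] qs(1) by simp
  ultimately show ?thesis by (simp add: bs_def)
qed

lemma main_count:
  "int (qdim Dsc (+) 0 DerS InnS) = int (card J) + int (qdim psc (+) 0 Zc I) - int (card (QC h Q))"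
proof -
  have finB: "finite ((\<lambda>j. Drq (fst j) (snd j)) ` J \<union> (\<lambda>q. adm (ind q)) ` Q')"
    using J_fin' Q'_fin by simp
  have a1: "qdim Dsc (+) 0 DerS I0 = qdim Dsc (+) 0 DerS InnS + qdim Dsc (+) 0 InnS I0"
    by (rule DV.qdim_add[OF I0_subspace Inn_subspace Der_subspace I0_Inn Inn_Der finB Der_modspan])
  show ?thesis using a1 dim_Der dim_Inn dim_add_center dim_P card_QC by linarith
qed

end

theorem proposition3p4:
  fixes V :: "'v set" and E :: "'e set" and s h :: "'e \<Rightarrow> 'v"
    and I :: "(('v,'e) path \<Rightarrow> 'k::field) set" and Q :: "('v,'e) path set"
  assumes "finite V" and "finite E"
    and "\<forall>e\<in>E. s e \<in> V \<and> h e \<in> V"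
    and "quiver_connected V E s h"
    and "two_sided_ideal V E s h I"
    and "I \<subseteq> arrow_ideal_sq V E s h"
    and "quot_fin_dim V E s h I"
    and "path_class_basis V E s h I Q"
  shows "int (H1_dim V E s h I)
           = int (card (B2 V E s h I Q)) + int (center_dim V E s h I) - int (card (QC h Q))"
proof -
  interpret QA2 V E s h I Q
    by unfold_locales (use assms in auto)
  have H: "H1_dim V E s h I = qdim Dsc (+) 0 DerS InnS" by (simp add: H1_dim_def Dadd_eq Dzero_eq)
  have Z: "center_dim V E s h I = qdim psc (+) 0 Zc I" by (simp add: center_dim_def padd_eq pzero_eq)
  show ?thesis unfolding H Z card_B2 by (rule main_count)
qed


end
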